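(* For each $n\ge1$ and $p\in[0,1)$, $R(\Sigma_n,p)=p^{3^n-1}(1-p)^{\frac{3^n-1}{2}}H_n\!\left(1,\tfrac1{1-p}\right)$ with $H_n(1,\frac1{1-p})=H_{2,n}(1,\frac1{1-p})$, where, writing $H_2,N,M$ for $H_{2,n},N_n,M_n$ at $(1,\frac1{1-p})$, $$H_{2,n+1}=\tfrac{p}{1-p}H_2^3+3H_2^3+6H_2^2N,$$ $$N_{n+1}=\tfrac{p}{1-p}H_2^2N+H_2^3+7H_2^2N+H_2^2M+7H_2N^2,$$ $$M_{n+1}=\tfrac{3p}{1-p}H_2N^2+H_2^3+12H_2^2N+3H_2^2M+36H_2N^2+12H_2NM+14N^3,$$ with $H_{2,1}=\frac{3-2p}{1-p}$, $N_1=M_1=1$.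
   Context: Graphs are finite. For a graph $G$, a spanning subgraph $A$ has vertex set $V(G)$ and edge set $E(A)\subseteq E(G)$; $k(A)$ is its number of components, $r(A)=|V(G)|-k(A)$, $n(A)=|E(A)|-r(A)$; the weight of $A$ is $(x-1)^{r(G)-r(A)}(y-1)^{n(A)}$ and the Tutte polynomial $T(G;x,y)$ is the sum of the weights of all spanning subgraphs. The graphs $\Sigma_n$ ($n\ge1$; Schreier graphs of the Hanoi Towers group $H^{(3)}$ with loops removed) each have three outmost vertices top, left, right: $\Sigma_1$ is the triangle $K_3$; $\Sigma_{n+1}$ is the disjoint union of three copies $G_1,G_2,G_3$ of $\Sigma_n$ together with three new edges joining left$(G_1)$ to top$(G_2)$, right$(G_1)$ to top$(G_3)$, and right$(G_2)$ to left$(G_3)$; its outmost vertices are top$(G_1)$, left$(G_2)$, right$(G_3)$. $H_n=T(\Sigma_n;x,y)$. $H_{2,n}$ (resp. $H_{1,n}$, $H_{0,n}$) is the sum of the weights of the spanning subgraphs of $\Sigma_n$ in which the three outmost vertices lie in one component (resp. left and right outmost in one component, top in another; resp. the three in three distinct components). $N_n=H_{1,n}/(x-1)$ and $M_n=H_{0,n}/(x-1)^2$, which are polynomials. $R(G,p)$ is the probability that the random spanning subgraph keeping each edge independently with probability $p$ is connected. *)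

theory Defs
  imports Complex_Main
begin

text \<open>A graph is given by a finite vertex set V and a set E of edges,
each edge being a two-element subset of V.  A spanning subgraph is identified
with its edge set A \<subseteq> E.\<close>

definition edge_rel :: "'a set set \<Rightarrow> ('a \<times> 'a) set" where
  "edge_rel A = {(u, v). {u, v} \<in> A}"

definition comp_rel :: "'a set \<Rightarrow> 'a set set \<Rightarrow> ('a \<times> 'a) set" where
  "comp_rel V A = {(u, v). u \<in> V \<and> v \<in> V \<and> (u, v) \<in> (edge_rel A)\<^sup>*}"

definition same_comp :: "'a set \<Rightarrow> 'a set set \<Rightarrow> 'a \<Rightarrow> 'a \<Rightarrow> bool" where
  "same_comp V A u v \<longleftrightarrow> (u, v) \<in> comp_rel V A"

definition ncomp :: "'a set \<Rightarrow> 'a set set \<Rightarrow> nat" where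
  "ncomp V A = card (V // comp_rel V A)"

definition grank :: "'a set \<Rightarrow> 'a set set \<Rightarrow> nat" where
  "grank V A = card V - ncomp V A"

definition nullity :: "'a set \<Rightarrow> 'a set set \<Rightarrow> nat" where
  "nullity V A = card A - grank V A"

text \<open>With d = 0 and P = True this is the Tutte polynomial; d = 1, 2 give the
polynomial quotients by (x-1), (x-1)^2 used for N_n and M_n.\<close>
definition tutte_part :: "'a set \<Rightarrow> 'a set set \<Rightarrow> ('a set set \<Rightarrow> bool) \<Rightarrow> nat \<Rightarrow> real \<Rightarrow> real \<Rightarrow> real" where
  "tutte_part V E P d x y =
     (\<Sum>A\<in>{A. A \<subseteq> E \<and> P A}.
        (x - 1) ^ (grank V E - grank V A - d) * (y - 1) ^ (nullity V A))"

definition tutte :: "'a set \<Rightarrow> 'a set set \<Rightarrow> real \<Rightarrow> real \<Rightarrow> real" where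
  "tutte V E x y = tutte_part V E (\<lambda>_. True) 0 x y"

text \<open>Reliability: probability that the random spanning subgraph keeping each
edge independently with probability p is connected.\<close>
definition reliability :: "'a set \<Rightarrow> 'a set set \<Rightarrow> real \<Rightarrow> real" where
  "reliability V E p =
     (\<Sum>A\<in>{A. A \<subseteq> E \<and> ncomp V A = 1}. p ^ card A * (1 - p) ^ (card E - card A))"

text \<open>Vertices of Sigma_n are words of length n over {0,1,2}; the copy G_(i+1)
of Sigma_n inside Sigma_(n+1) consists of the words starting with letter i.\<close>

definition sigma_verts :: "nat \<Rightarrow> nat list set" where
  "sigma_verts n = {w. length w = n \<and> set w \<subseteq> {0, 1, 2}}"

definition top_v :: "nat \<Rightarrow> nat list" where "top_v n = replicate n 0"
definition left_v :: "nat \<Rightarrow> nat list" where "left_v n = replicate n 1"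
definition right_v :: "nat \<Rightarrow> nat list" where "right_v n = replicate n 2"

fun sigma_edges :: "nat \<Rightarrow> nat list set set" where
  "sigma_edges 0 = {}"
| "sigma_edges (Suc 0) = {{[0], [1]}, {[1], [2]}, {[0], [2]}}"
| "sigma_edges (Suc (Suc n)) =
     (\<Union>i\<in>{0, 1, 2}. (\<lambda>e. (\<lambda>w. i # w) ` e) ` sigma_edges (Suc n))
     \<union> {{0 # left_v (Suc n), 1 # top_v (Suc n)},
        {0 # right_v (Suc n), 2 # top_v (Suc n)},
        {1 # right_v (Suc n), 2 # left_v (Suc n)}}"

text \<open>H_n, H_{2,n}, N_n = H_{1,n}/(x-1), M_n = H_{0,n}/(x-1)^2 (as functions of real x, y).\<close>

definition Hn :: "nat \<Rightarrow> real \<Rightarrow> real \<Rightarrow> real" where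
  "Hn n x y = tutte (sigma_verts n) (sigma_edges n) x y"

definition H2 :: "nat \<Rightarrow> real \<Rightarrow> real \<Rightarrow> real" where
  "H2 n x y = tutte_part (sigma_verts n) (sigma_edges n)
     (\<lambda>A. same_comp (sigma_verts n) A (top_v n) (left_v n) \<and>
          same_comp (sigma_verts n) A (top_v n) (right_v n)) 0 x y"

definition Nn :: "nat \<Rightarrow> real \<Rightarrow> real \<Rightarrow> real" where
  "Nn n x y = tutte_part (sigma_verts n) (sigma_edges n)
     (\<lambda>A. same_comp (sigma_verts n) A (left_v n) (right_v n) \<and>
          \<not> same_comp (sigma_verts n) A (top_v n) (left_v n)) 1 x y"

definition Mn :: "nat \<Rightarrow> real \<Rightarrow> real \<Rightarrow> real" where
  "Mn n x y = tutte_part (sigma_verts n) (sigma_edges n)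
     (\<lambda>A. \<not> same_comp (sigma_verts n) A (top_v n) (left_v n) \<and>
          \<not> same_comp (sigma_verts n) A (top_v n) (right_v n) \<and>
          \<not> same_comp (sigma_verts n) A (left_v n) (right_v n)) 2 x y"

end

theory Submission
  imports Defs
begin


definition wfE :: "'a set \<Rightarrow> 'a set set \<Rightarrow> bool" where
 "wfE V A \<longleftrightarrow> (\<forall>e\<in>A. \<exists>a b. e = {a,b} \<and> a \<noteq> b \<and> a \<in> V \<and> b \<in> V)"

lemma wfE_mono: "wfE V A \<Longrightarrow> B \<subseteq> A \<Longrightarrow> wfE V B"
  unfolding wfE_def by blast

lemma edge_rel_sym: "sym (edge_rel A)"
  unfolding edge_rel_def sym_def by (auto simp: insert_commute)

lemma edge_rel_sub: "wfE V A \<Longrightarrow> edge_rel A \<subseteq> V \<times> V"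
  unfolding wfE_def edge_rel_def by (auto simp: doubleton_eq_iff)

lemma comp_rel_sub: "comp_rel V A \<subseteq> V \<times> V"
  unfolding comp_rel_def by auto

lemma equiv_comp: "equiv V (comp_rel V A)"
proof -
  have s: "sym ((edge_rel A)\<^sup>*)" using edge_rel_sym sym_rtrancl by blast
  show ?thesis unfolding equiv_def refl_on_def sym_def trans_def comp_rel_def
    using s by (auto simp: sym_def)
qed

lemma same_comp_refl: "x \<in> V \<Longrightarrow> same_comp V A x x"
  unfolding same_comp_def comp_rel_def by auto

lemma same_comp_sym: "same_comp V A x y \<Longrightarrow> same_comp V A y x"
  using equiv_comp[of V A] unfolding same_comp_def equiv_def sym_def by blast

lemma same_comp_trans: "same_comp V A x y \<Longrightarrow> same_comp V A y z \<Longrightarrow> same_comp V A x z"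
  using equiv_comp[of V A] unfolding same_comp_def equiv_def trans_def by blast

lemma same_comp_in: "same_comp V A x y \<Longrightarrow> x \<in> V \<and> y \<in> V"
  unfolding same_comp_def comp_rel_def by auto

lemma quotient_img: "V // r = (\<lambda>x. r `` {x}) ` V"
  unfolding quotient_def by auto

lemma finite_quot: "finite V \<Longrightarrow> finite (V // r)"
  by (simp add: quotient_img)

lemma ncomp_le: "finite V \<Longrightarrow> ncomp V A \<le> card V"
  unfolding ncomp_def quotient_img by (rule card_image_le)

lemma ncomp_ge1: "finite V \<Longrightarrow> V \<noteq> {} \<Longrightarrow> ncomp V A \<ge> 1"
  unfolding ncomp_def quotient_img
  by (simp add: Suc_leI card_gt_0_iff)

lemma class_eq: "x \<in> V \<Longrightarrow> y \<in> V \<Longrightarrow> comp_rel V A `` {x} = comp_rel V A `` {y} \<longleftrightarrow> same_comp V A x y"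
  unfolding same_comp_def using equiv_comp[of V A]
  by (simp add: equiv_class_eq_iff)

lemma ncomp_ge2: "finite V \<Longrightarrow> x \<in> V \<Longrightarrow> y \<in> V \<Longrightarrow> \<not> same_comp V A x y \<Longrightarrow> ncomp V A \<ge> 2"
proof -
  assume f: "finite V" and x: "x \<in> V" and y: "y \<in> V" and n: "\<not> same_comp V A x y"
  let ?Q = "comp_rel V A"
  have "{?Q``{x}, ?Q``{y}} \<subseteq> V // ?Q" using x y by (auto simp: quotient_img)
  moreover have "card {?Q``{x}, ?Q``{y}} = 2" using class_eq[OF x y] n by auto
  ultimately show ?thesis unfolding ncomp_def
    by (metis card_mono f finite_quot)
qed

lemma ncomp_ge3: "finite V \<Longrightarrow> x \<in> V \<Longrightarrow> y \<in> V \<Longrightarrow> z \<in> V \<Longrightarrow> \<not> same_comp V A x y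
   \<Longrightarrow> \<not> same_comp V A x z \<Longrightarrow> \<not> same_comp V A y z \<Longrightarrow> ncomp V A \<ge> 3"
proof -
  assume f: "finite V" and x: "x \<in> V" and y: "y \<in> V" and z: "z \<in> V"
    and n: "\<not> same_comp V A x y" "\<not> same_comp V A x z" "\<not> same_comp V A y z"
  let ?Q = "comp_rel V A"
  have "{?Q``{x}, ?Q``{y}, ?Q``{z}} \<subseteq> V // ?Q" using x y z by (auto simp: quotient_img)
  moreover have "card {?Q``{x}, ?Q``{y}, ?Q``{z}} = 3"
    using class_eq[OF x y] class_eq[OF x z] class_eq[OF y z] n by auto
  ultimately show ?thesis unfolding ncomp_def
    by (metis card_mono f finite_quot)
qed

lemma ncomp_one_same: "finite V \<Longrightarrow> ncomp V A = 1 \<Longrightarrow> x \<in> V \<Longrightarrow> y \<in> V \<Longrightarrow> same_comp V A x y"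
  using ncomp_ge2 by fastforce

lemma rt_ins:
  assumes s: "sym R"
  shows "(x,y) \<in> (R \<union> {(a,b),(b,a)})\<^sup>* \<longleftrightarrow>
     (x,y) \<in> R\<^sup>* \<or> ((x,a) \<in> R\<^sup>* \<and> (b,y) \<in> R\<^sup>*) \<or> ((x,b) \<in> R\<^sup>* \<and> (a,y) \<in> R\<^sup>*)"
proof
  assume "(x,y) \<in> (R \<union> {(a,b),(b,a)})\<^sup>*"
  then show "(x,y) \<in> R\<^sup>* \<or> ((x,a) \<in> R\<^sup>* \<and> (b,y) \<in> R\<^sup>*) \<or> ((x,b) \<in> R\<^sup>* \<and> (a,y) \<in> R\<^sup>*)"
  proof (induction rule: rtrancl_induct)
    case base then show ?case by simp
  next
    case (step y z)
    have sr: "sym (R\<^sup>*)" using s sym_rtrancl by blast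
    from step.hyps(2) consider "(y,z) \<in> R" | "y = a \<and> z = b" | "y = b \<and> z = a" by blast
    then show ?case
    proof cases
      case 1 then show ?thesis using step.IH
        by (meson rtrancl.rtrancl_into_rtrancl)
    next
      case 2 then show ?thesis using step.IH sr
        by (meson rtrancl.rtrancl_refl rtrancl_trans symD)
    next
      case 3 then show ?thesis using step.IH sr
        by (meson rtrancl.rtrancl_refl rtrancl_trans symD)
    qed
  qed
next
  have sub: "R\<^sup>* \<subseteq> (R \<union> {(a,b),(b,a)})\<^sup>*" by (rule rtrancl_mono) auto
  have ab: "(a,b) \<in> (R \<union> {(a,b),(b,a)})\<^sup>*" "(b,a) \<in> (R \<union> {(a,b),(b,a)})\<^sup>*" by auto
  assume "(x,y) \<in> R\<^sup>* \<or> ((x,a) \<in> R\<^sup>* \<and> (b,y) \<in> R\<^sup>*) \<or> ((x,b) \<in> R\<^sup>* \<and> (a,y) \<in> R\<^sup>*)"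
  then show "(x,y) \<in> (R \<union> {(a,b),(b,a)})\<^sup>*"
    using sub ab by (meson rtrancl_trans subsetD)
qed

lemma edge_rel_insert: "edge_rel (insert {a,b} A) = edge_rel A \<union> {(a,b),(b,a)}"
  unfolding edge_rel_def by (auto simp: doubleton_eq_iff)

lemma same_comp_insert:
  assumes "a \<in> V" "b \<in> V"
  shows "same_comp V (insert {a,b} A) x y \<longleftrightarrow>
     same_comp V A x y \<or> (same_comp V A x a \<and> same_comp V A b y) \<or> (same_comp V A x b \<and> same_comp V A a y)"
proof -
  have "((x,y) \<in> (edge_rel A \<union> {(a,b),(b,a)})\<^sup>*) = ((x,y) \<in> (edge_rel A)\<^sup>* \<or> ((x,a) \<in> (edge_rel A)\<^sup>* \<and> (b,y) \<in> (edge_rel A)\<^sup>*) \<or> ((x,b) \<in> (edge_rel A)\<^sup>* \<and> (a,y) \<in> (edge_rel A)\<^sup>*))"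
    by (rule rt_ins[OF edge_rel_sym])
  then show ?thesis unfolding same_comp_def comp_rel_def edge_rel_insert
    using assms by auto
qed

lemma ncomp_insert:
  assumes f: "finite V" and a: "a \<in> V" and b: "b \<in> V"
  shows "ncomp V (insert {a,b} A) = (if same_comp V A a b then ncomp V A else ncomp V A - 1)"
proof (cases "same_comp V A a b")
  case True
  have "comp_rel V (insert {a,b} A) = comp_rel V A"
    using same_comp_insert[OF a b, of A] True
    unfolding same_comp_def[symmetric] 
    by (auto simp: same_comp_def[symmetric]) (meson same_comp_trans same_comp_sym)+
  then show ?thesis using True unfolding ncomp_def by simp
next
  case False
  let ?Q = "comp_rel V A" and ?Q' = "comp_rel V (insert {a,b} A)"
  let ?Ca = "?Q``{a}" and ?Cb = "?Q``{b}"
  have cls: "?Q'``{x} = (if same_comp V A x a \<or> same_comp V A x b then ?Ca \<union> ?Cb else ?Q``{x})"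
    if x: "x \<in> V" for x
  proof -
    have "z \<in> ?Q'``{x} \<longleftrightarrow> z \<in> (if same_comp V A x a \<or> same_comp V A x b then ?Ca \<union> ?Cb else ?Q``{x})" for z
    proof -
      have "z \<in> ?Q'``{x} \<longleftrightarrow> same_comp V (insert {a,b} A) x z" unfolding same_comp_def by auto
      also have "\<dots> \<longleftrightarrow> same_comp V A x z \<or> (same_comp V A x a \<and> same_comp V A b z) \<or> (same_comp V A x b \<and> same_comp V A a z)"
        using same_comp_insert[OF a b] by blast
      finally show ?thesis unfolding same_comp_def[symmetric]
        by (auto simp: same_comp_def[symmetric] dest: same_comp_sym intro: same_comp_trans)
    qed
    then show ?thesis by blast
  qed
  have Ca: "?Ca \<in> V // ?Q" and Cb: "?Cb \<in> V // ?Q" using a b by (auto simp: quotient_img)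
  have neq: "?Ca \<noteq> ?Cb" using class_eq[OF a b] False by simp
  have eqQ: "V // ?Q' = insert (?Ca \<union> ?Cb) (V // ?Q - {?Ca, ?Cb})"
  proof
    show "V // ?Q' \<subseteq> insert (?Ca \<union> ?Cb) (V // ?Q - {?Ca, ?Cb})"
    proof
      fix X assume "X \<in> V // ?Q'"
      then obtain x where x: "x \<in> V" and X: "X = ?Q'``{x}" by (auto simp: quotient_img)
      show "X \<in> insert (?Ca \<union> ?Cb) (V // ?Q - {?Ca, ?Cb})"
      proof (cases "same_comp V A x a \<or> same_comp V A x b")
        case True then show ?thesis using X cls[OF x] by simp
      next
        case F: False
        have "?Q``{x} \<noteq> ?Ca" "?Q``{x} \<noteq> ?Cb" using class_eq[OF x a] class_eq[OF x b] F by auto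
        then show ?thesis using X cls[OF x] F x by (auto simp: quotient_img)
      qed
    qed
  next
    show "insert (?Ca \<union> ?Cb) (V // ?Q - {?Ca, ?Cb}) \<subseteq> V // ?Q'"
    proof
      fix X assume X: "X \<in> insert (?Ca \<union> ?Cb) (V // ?Q - {?Ca, ?Cb})"
      show "X \<in> V // ?Q'"
      proof (cases "X = ?Ca \<union> ?Cb")
        case True
        have "?Q'``{a} = ?Ca \<union> ?Cb" using cls[OF a] same_comp_refl[OF a] by simp
        then show ?thesis using True a by (auto simp: quotient_img)
      next
        case F: False
        then obtain x where x: "x \<in> V" and Xx: "X = ?Q``{x}" and n: "X \<noteq> ?Ca" "X \<noteq> ?Cb"
          using X by (auto simp: quotient_img)
        have "\<not> (same_comp V A x a \<or> same_comp V A x b)" using class_eq[OF x a] class_eq[OF x b] n Xx by auto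
        then have "?Q'``{x} = X" using cls[OF x] Xx by simp
        then show ?thesis using x by (auto simp: quotient_img)
      qed
    qed
  qed
  have notin: "?Ca \<union> ?Cb \<notin> V // ?Q - {?Ca, ?Cb}"
  proof
    assume "?Ca \<union> ?Cb \<in> V // ?Q - {?Ca, ?Cb}"
    then obtain x where x: "x \<in> V" and e: "?Ca \<union> ?Cb = ?Q``{x}" and n: "?Q``{x} \<noteq> ?Ca"
      by (auto simp: quotient_img)
    have "a \<in> ?Ca" using same_comp_refl[OF a] unfolding same_comp_def by auto
    then have "a \<in> ?Q``{x}" using e by auto
    then have "same_comp V A x a" unfolding same_comp_def by auto
    then show False using class_eq[OF x a] n by simp
  qed
  have fq: "finite (V // ?Q)" using f finite_quot by blast
  have "card (V // ?Q') = card (V // ?Q - {?Ca, ?Cb}) + 1"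
    using eqQ notin fq by simp
  also have "card (V // ?Q - {?Ca, ?Cb}) = card (V // ?Q) - 2"
    using Ca Cb neq fq by (simp add: card_Diff_subset)
  finally have "card (V // ?Q') = card (V // ?Q) - 2 + 1" .
  moreover have "card (V // ?Q) \<ge> 2" using ncomp_ge2[OF f a b False] unfolding ncomp_def .
  ultimately show ?thesis using False unfolding ncomp_def by simp
qed



lemma ncomp_empty: "finite V \<Longrightarrow> ncomp V {} = card V"
proof -
  assume f: "finite V"
  have e: "edge_rel {} = {}" unfolding edge_rel_def by auto
  have "comp_rel V {} = Id_on V" unfolding comp_rel_def e by (auto simp: Id_on_def)
  then have "V // comp_rel V {} = (\<lambda>x. {x}) ` V" unfolding quotient_img by auto
  then show ?thesis unfolding ncomp_def by (simp add: card_image)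
qed



lemma forest_bound:
  assumes "finite A" "finite V" "wfE V A"
  shows "card V \<le> card A + ncomp V A"
  using assms
proof (induction A rule: finite_induct)
  case empty then show ?case by (simp add: ncomp_empty)
next
  case (insert e A)
  then obtain a b where e: "e = {a,b}" "a \<in> V" "b \<in> V" unfolding wfE_def by blast
  have "wfE V A" using insert.prems wfE_mono by blast
  then have IH: "card V \<le> card A + ncomp V A" using insert by blast
  have "ncomp V (insert e A) + 1 \<ge> ncomp V A"
    using ncomp_insert[OF insert.prems(1) e(2,3), of A] e(1) by auto
  then show ?case using IH insert.hyps by simp
qed



lemma rt_union_disj:
  assumes "R1 \<subseteq> V1 \<times> V1" "R2 \<subseteq> V2 \<times> V2" "V1 \<inter> V2 = {}"
  shows "(x,y) \<in> (R1 \<union> R2)\<^sup>* \<Longrightarrow> (x,y) \<in> R1\<^sup>* \<or> (x,y) \<in> R2\<^sup>*"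
proof (induction rule: rtrancl_induct)
  case base then show ?case by simp
next
  case (step y z)
  have t1: "R1\<^sup>+ \<subseteq> V1 \<times> V1" using assms(1) trancl_subset_Sigma by blast
  have t2: "R2\<^sup>+ \<subseteq> V2 \<times> V2" using assms(2) trancl_subset_Sigma by blast
  from step.IH show ?case
  proof
    assume h: "(x,y) \<in> R1\<^sup>*"
    show ?case
    proof (cases "(y,z) \<in> R1")
      case True then show ?thesis using h by (meson rtrancl.rtrancl_into_rtrancl)
    next
      case False
      then have yz: "(y,z) \<in> R2" using step.hyps(2) by blast
      then have "y \<in> V2" using assms(2) by blast
      show ?thesis
      proof (cases "x = y")
        case True then show ?thesis using yz by blast
      next
        case False
        then have "(x,y) \<in> R1\<^sup>+" using h by (simp add: rtrancl_eq_or_trancl)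
        then have "y \<in> V1" using t1 by blast
        then show ?thesis using \<open>y \<in> V2\<close> assms(3) by blast
      qed
    qed
  next
    assume h: "(x,y) \<in> R2\<^sup>*"
    show ?case
    proof (cases "(y,z) \<in> R2")
      case True then show ?thesis using h by (meson rtrancl.rtrancl_into_rtrancl)
    next
      case False
      then have yz: "(y,z) \<in> R1" using step.hyps(2) by blast
      then have "y \<in> V1" using assms(1) by blast
      show ?thesis
      proof (cases "x = y")
        case True then show ?thesis using yz by blast
      next
        case False
        then have "(x,y) \<in> R2\<^sup>+" using h by (simp add: rtrancl_eq_or_trancl)
        then have "y \<in> V2" using t2 by blast
        then show ?thesis using \<open>y \<in> V1\<close> assms(3) by blast
      qed
    qed
  qed
qed



lemma comp_rel_union:
  assumes "wfE V1 A1" "wfE V2 A2" "V1 \<inter> V2 = {}"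
  shows "comp_rel (V1 \<union> V2) (A1 \<union> A2) = comp_rel V1 A1 \<union> comp_rel V2 A2"
proof -
  have eu: "edge_rel (A1 \<union> A2) = edge_rel A1 \<union> edge_rel A2" unfolding edge_rel_def by auto
  have s1: "edge_rel A1 \<subseteq> V1 \<times> V1" "edge_rel A2 \<subseteq> V2 \<times> V2" using assms edge_rel_sub by blast+
  have m1: "(edge_rel A1)\<^sup>* \<subseteq> (edge_rel A1 \<union> edge_rel A2)\<^sup>*" by (rule rtrancl_mono) auto
  have m2: "(edge_rel A2)\<^sup>* \<subseteq> (edge_rel A1 \<union> edge_rel A2)\<^sup>*" by (rule rtrancl_mono) auto
  show ?thesis unfolding comp_rel_def eu
  proof (intro equalityI subsetI)
    fix z assume "z \<in> {(u, v). u \<in> V1 \<union> V2 \<and> v \<in> V1 \<union> V2 \<and> (u, v) \<in> (edge_rel A1 \<union> edge_rel A2)\<^sup>*}"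
    then obtain u v where z: "z = (u,v)" "u \<in> V1 \<union> V2" "v \<in> V1 \<union> V2" "(u, v) \<in> (edge_rel A1 \<union> edge_rel A2)\<^sup>*" by blast
    from rt_union_disj[OF s1 assms(3) z(4)] consider "(u,v) \<in> (edge_rel A1)\<^sup>*" | "(u,v) \<in> (edge_rel A2)\<^sup>*" by blast
    then show "z \<in> {(u, v). u \<in> V1 \<and> v \<in> V1 \<and> (u, v) \<in> (edge_rel A1)\<^sup>*} \<union> {(u, v). u \<in> V2 \<and> v \<in> V2 \<and> (u, v) \<in> (edge_rel A2)\<^sup>*}"
    proof cases
      case 1
      show ?thesis
      proof (cases "u = v")
        case True then show ?thesis using z 1 by auto
      next
        case False
        then have "(u,v) \<in> (edge_rel A1)\<^sup>+" using 1 by (simp add: rtrancl_eq_or_trancl)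
        then have "u \<in> V1 \<and> v \<in> V1" using s1(1) trancl_subset_Sigma by blast
        then show ?thesis using z 1 by auto
      qed
    next
      case 2
      show ?thesis
      proof (cases "u = v")
        case True then show ?thesis using z 2 by auto
      next
        case False
        then have "(u,v) \<in> (edge_rel A2)\<^sup>+" using 2 by (simp add: rtrancl_eq_or_trancl)
        then have "u \<in> V2 \<and> v \<in> V2" using s1(2) trancl_subset_Sigma by blast
        then show ?thesis using z 2 by auto
      qed
    qed
  next
    fix z assume "z \<in> {(u, v). u \<in> V1 \<and> v \<in> V1 \<and> (u, v) \<in> (edge_rel A1)\<^sup>*} \<union> {(u, v). u \<in> V2 \<and> v \<in> V2 \<and> (u, v) \<in> (edge_rel A2)\<^sup>*}"
    then show "z \<in> {(u, v). u \<in> V1 \<union> V2 \<and> v \<in> V1 \<union> V2 \<and> (u, v) \<in> (edge_rel A1 \<union> edge_rel A2)\<^sup>*}"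
      using m1 m2 by blast
  qed
qed



lemma same_comp_union:
  assumes "wfE V1 A1" "wfE V2 A2" "V1 \<inter> V2 = {}"
  shows "same_comp (V1 \<union> V2) (A1 \<union> A2) x y \<longleftrightarrow> same_comp V1 A1 x y \<or> same_comp V2 A2 x y"
  unfolding same_comp_def comp_rel_union[OF assms] by simp



lemma ncomp_union:
  assumes "wfE V1 A1" "wfE V2 A2" "V1 \<inter> V2 = {}" "finite V1" "finite V2"
  shows "ncomp (V1 \<union> V2) (A1 \<union> A2) = ncomp V1 A1 + ncomp V2 A2"
proof -
  let ?Q1 = "comp_rel V1 A1" and ?Q2 = "comp_rel V2 A2"
  have c1: "(?Q1 \<union> ?Q2) `` {x} = ?Q1 `` {x}" if "x \<in> V1" for x
    using that assms(3) comp_rel_sub[of V2 A2] by auto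
  have c2: "(?Q1 \<union> ?Q2) `` {x} = ?Q2 `` {x}" if "x \<in> V2" for x
    using that assms(3) comp_rel_sub[of V1 A1] by auto
  have eq: "(V1 \<union> V2) // (?Q1 \<union> ?Q2) = V1 // ?Q1 \<union> V2 // ?Q2"
    unfolding quotient_img using c1 c2 by (auto simp: image_Un)
  have d: "V1 // ?Q1 \<inter> V2 // ?Q2 = {}"
  proof -
    have "X \<notin> V2 // ?Q2" if "X \<in> V1 // ?Q1" for X
    proof -
      obtain x where x: "x \<in> V1" "X = ?Q1``{x}" using \<open>X \<in> V1 // ?Q1\<close> by (auto simp: quotient_img)
      have "x \<in> X" using x same_comp_refl[of x V1 A1] unfolding same_comp_def by auto
      moreover have "Y \<subseteq> V2" if "Y \<in> V2 // ?Q2" for Y using that comp_rel_sub[of V2 A2] by (auto simp: quotient_img)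
      ultimately show ?thesis using x(1) assms(3) by blast
    qed
    then show ?thesis by blast
  qed
  show ?thesis unfolding ncomp_def comp_rel_union[OF assms(1-3)] eq
    using d assms(4,5) by (intro card_Un_disjoint finite_quot)
qed



definition imgE :: "('a \<Rightarrow> 'b) \<Rightarrow> 'a set set \<Rightarrow> 'b set set" where
  "imgE f A = (\<lambda>e. f ` e) ` A"



lemma wfE_img: "wfE V A \<Longrightarrow> inj_on f V \<Longrightarrow> wfE (f ` V) (imgE f A)"
proof -
  assume w: "wfE V A" and inj: "inj_on f V"
  show ?thesis unfolding wfE_def
  proof
    fix e' assume "e' \<in> imgE f A"
    then obtain e where e: "e \<in> A" "e' = f ` e" unfolding imgE_def by blast
    then obtain a b where ab: "e = {a,b}" "a \<noteq> b" "a \<in> V" "b \<in> V" using w unfolding wfE_def by blast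
    have "f a \<noteq> f b" using inj ab inj_onD by metis
    then show "\<exists>a b. e' = {a, b} \<and> a \<noteq> b \<and> a \<in> f ` V \<and> b \<in> f ` V" using e ab by auto
  qed
qed



lemma edge_rel_img: "wfE V A \<Longrightarrow> edge_rel (imgE f A) = map_prod f f ` edge_rel A"
proof -
  assume w: "wfE V A"
  show ?thesis
  proof (intro equalityI subsetI)
    fix z assume "z \<in> edge_rel (imgE f A)"
    then obtain u v e where z: "z = (u,v)" "e \<in> A" "{u,v} = f ` e" unfolding edge_rel_def imgE_def by auto
    then obtain a b where e: "e = {a,b}" using w unfolding wfE_def by blast
    then have "{u,v} = {f a, f b}" using z by auto
    then have "(u = f a \<and> v = f b) \<or> (u = f b \<and> v = f a)" by (auto simp: doubleton_eq_iff)
    moreover have "(a,b) \<in> edge_rel A" "(b,a) \<in> edge_rel A" using z e unfolding edge_rel_def by (auto simp: insert_commute)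
    ultimately show "z \<in> map_prod f f ` edge_rel A" using z by force
  next
    fix z assume "z \<in> map_prod f f ` edge_rel A"
    then obtain a b where z: "z = (f a, f b)" "{a,b} \<in> A" unfolding edge_rel_def by auto
    then have "f ` {a,b} \<in> imgE f A" unfolding imgE_def by blast
    then show "z \<in> edge_rel (imgE f A)" using z unfolding edge_rel_def by auto
  qed
qed



lemma rt_map:
  assumes inj: "inj_on f V" and R: "R \<subseteq> V \<times> V" and x: "x \<in> V" and y: "y \<in> V"
  shows "(f x, f y) \<in> (map_prod f f ` R)\<^sup>* \<longleftrightarrow> (x,y) \<in> R\<^sup>*"
proof
  assume "(x,y) \<in> R\<^sup>*"
  then show "(f x, f y) \<in> (map_prod f f ` R)\<^sup>*"
  proof (induction rule: rtrancl_induct)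
    case base then show ?case by simp
  next
    case (step y z)
    then have "(f y, f z) \<in> map_prod f f ` R" by force
    then show ?case using step.IH by (meson rtrancl.rtrancl_into_rtrancl)
  qed
next
  assume h: "(f x, f y) \<in> (map_prod f f ` R)\<^sup>*"
  have "\<exists>w. z = f w \<and> w \<in> V \<and> (x,w) \<in> R\<^sup>*" if "(f x, z) \<in> (map_prod f f ` R)\<^sup>*" for z
    using that
  proof (induction rule: rtrancl_induct)
    case base then show ?case using x by blast
  next
    case (step z z')
    then obtain w where w: "z = f w" "w \<in> V" "(x,w) \<in> R\<^sup>*" by blast
    obtain a b where ab: "(a,b) \<in> R" "z = f a" "z' = f b" using step.hyps(2) by auto
    have "a \<in> V" "b \<in> V" using ab R by auto
    then have "a = w" using inj w ab inj_onD by metis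
    then have "(x,b) \<in> R\<^sup>*" using ab(1) w(3) by (meson rtrancl.rtrancl_into_rtrancl)
    then show ?case using ab(3) \<open>b \<in> V\<close> by blast
  qed
  from this[OF h] obtain w where "f y = f w" "w \<in> V" "(x,w) \<in> R\<^sup>*" by blast
  then show "(x,y) \<in> R\<^sup>*" using inj y inj_onD by metis
qed



lemma same_comp_img:
  assumes "wfE V A" "inj_on f V" "x \<in> V" "y \<in> V"
  shows "same_comp (f ` V) (imgE f A) (f x) (f y) \<longleftrightarrow> same_comp V A x y"
  unfolding same_comp_def comp_rel_def edge_rel_img[OF assms(1)]
  using rt_map[OF assms(2) edge_rel_sub[OF assms(1)] assms(3,4)] assms(3,4) by auto



lemma ncomp_img:
  assumes w: "wfE V A" and inj: "inj_on f V"
  shows "ncomp (f ` V) (imgE f A) = ncomp V A"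
proof -
  let ?Q = "comp_rel V A" and ?Q' = "comp_rel (f ` V) (imgE f A)"
  have cl: "?Q' `` {f x} = f ` (?Q `` {x})" if x: "x \<in> V" for x
  proof (intro equalityI subsetI)
    fix z assume "z \<in> ?Q' `` {f x}"
    then have "same_comp (f ` V) (imgE f A) (f x) z" unfolding same_comp_def by auto
    then have "z \<in> f ` V" using same_comp_in[of "f ` V" "imgE f A" "f x" z] by simp
    then obtain y where y: "y \<in> V" "z = f y" by blast
    then have "same_comp V A x y" using same_comp_img[OF w inj x y(1)] \<open>same_comp (f ` V) (imgE f A) (f x) z\<close> by simp
    then show "z \<in> f ` (?Q `` {x})" using y unfolding same_comp_def by auto
  next
    fix z assume "z \<in> f ` (?Q `` {x})"
    then obtain y where y: "z = f y" "same_comp V A x y" unfolding same_comp_def by auto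
    then have "y \<in> V" using same_comp_in[OF y(2)] by simp
    then show "z \<in> ?Q' `` {f x}" using same_comp_img[OF w inj x] y unfolding same_comp_def by auto
  qed
  have eq: "(f ` V) // ?Q' = (\<lambda>X. f ` X) ` (V // ?Q)"
    unfolding quotient_img image_image using cl by auto
  have "inj_on (\<lambda>X. f ` X) (V // ?Q)"
  proof (rule inj_on_subset[OF inj_on_image_Pow[OF inj]])
    show "V // ?Q \<subseteq> Pow V" using comp_rel_sub[of V A] by (auto simp: quotient_img)
  qed
  then show ?thesis unfolding ncomp_def eq by (simp add: card_image)
qed



lemma card_imgE: "wfE V A \<Longrightarrow> inj_on f V \<Longrightarrow> card (imgE f A) = card A"
  unfolding imgE_def
  apply (rule card_image)
  apply (rule inj_on_subset[OF inj_on_image_Pow])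
  apply assumption
  unfolding wfE_def by auto





type_synonym ty = "bool \<times> bool \<times> bool"

definition rhoT :: "ty \<Rightarrow> nat \<Rightarrow> nat \<Rightarrow> bool" where
 "rhoT \<tau> j j' = (j = j' \<or> (case \<tau> of (a,b,c) \<Rightarrow>
     (j + j' = 1 \<and> a) \<or> (j + j' = 2 \<and> j \<noteq> j' \<and> b) \<or> (j + j' = 3 \<and> c)))"

definition M0 :: "ty \<Rightarrow> ty \<Rightarrow> ty \<Rightarrow> nat \<times> nat \<Rightarrow> nat \<times> nat \<Rightarrow> bool" where
 "M0 t0 t1 t2 x y = (fst x = fst y \<and> rhoT (if fst x = 0 then t0 else if fst x = 1 then t1 else t2) (snd x) (snd y))"

definition stepm :: "(nat \<times> nat \<Rightarrow> nat \<times> nat \<Rightarrow> bool) \<Rightarrow> bool \<Rightarrow> nat \<times> nat \<Rightarrow> nat \<times> nat \<Rightarrow> nat \<times> nat \<Rightarrow> nat \<times> nat \<Rightarrow> bool" where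
 "stepm m s a b x y = (m x y \<or> (s \<and> ((m x a \<and> m b y) \<or> (m x b \<and> m a y))))"

definition Mf :: "ty \<Rightarrow> ty \<Rightarrow> ty \<Rightarrow> ty \<Rightarrow> nat \<times> nat \<Rightarrow> nat \<times> nat \<Rightarrow> bool" where
 "Mf t0 t1 t2 s = (case s of (s1,s2,s3) \<Rightarrow>
    stepm (stepm (stepm (M0 t0 t1 t2) s1 (0,1) (1,0)) s2 (0,2) (2,0)) s3 (1,2) (2,1))"

definition mg :: "ty \<Rightarrow> ty \<Rightarrow> ty \<Rightarrow> ty \<Rightarrow> nat" where
 "mg t0 t1 t2 s = (case s of (s1,s2,s3) \<Rightarrow>
    (if s1 \<and> \<not> M0 t0 t1 t2 (0,1) (1,0) then 1 else 0)
  + (if s2 \<and> \<not> stepm (M0 t0 t1 t2) s1 (0,1) (1,0) (0,2) (2,0) then 1 else 0)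
  + (if s3 \<and> \<not> stepm (stepm (M0 t0 t1 t2) s1 (0,1) (1,0)) s2 (0,2) (2,0) (1,2) (2,1) then 1 else 0))"

definition nb :: "ty \<Rightarrow> nat" where
 "nb s = (case s of (a,b,c) \<Rightarrow> (if a then 1 else 0) + (if b then 1 else 0) + (if c then 1 else 0))"

definition cls :: "ty \<Rightarrow> nat" where
 "cls t = (case t of (a,b,c) \<Rightarrow> if a \<and> b then 1 else if a \<or> b \<or> c then 2 else 3)"

definition fct :: "ty \<Rightarrow> ty \<Rightarrow> ty \<Rightarrow> ty \<Rightarrow> ty" where
 "fct t0 t1 t2 s = (Mf t0 t1 t2 s (0,0) (1,1), Mf t0 t1 t2 s (0,0) (2,2), Mf t0 t1 t2 s (1,1) (2,2))"

definition Tys :: "ty set" where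
 "Tys = {(True,True,True),(False,False,True),(True,False,False),(False,True,False),(False,False,False)}"

definition Gt :: "real \<Rightarrow> ty \<Rightarrow> ty \<Rightarrow> ty \<Rightarrow> ty \<Rightarrow> ty \<Rightarrow> real" where
 "Gt q tX t0 t1 t2 s = (if cls t0 + cls t1 + cls t2 - mg t0 t1 t2 s = cls tX \<and> fct t0 t1 t2 s = tX
     then q ^ (nb s - mg t0 t1 t2 s) else 0)"

definition sumS :: "(ty \<Rightarrow> real) \<Rightarrow> real" where
 "sumS f = f (False,False,False) + f (False,False,True) + f (False,True,False) + f (False,True,True)
   + f (True,False,False) + f (True,False,True) + f (True,True,False) + f (True,True,True)"

definition Tv :: "real \<Rightarrow> real \<Rightarrow> real \<Rightarrow> ty \<Rightarrow> real" where
 "Tv H N M t = (if t = (True,True,True) then H else if t = (False,False,False) then M else N)"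

lemma fin_ineq: "\<forall>t0\<in>Tys. \<forall>t1\<in>Tys. \<forall>t2\<in>Tys. \<forall>s1 s2 s3. 
   mg t0 t1 t2 (s1,s2,s3) + cls (fct t0 t1 t2 (s1,s2,s3)) \<le> cls t0 + cls t1 + cls t2 \<and> mg t0 t1 t2 (s1,s2,s3) \<le> nb (s1,s2,s3)"
  unfolding Tys_def by code_simp

lemma finH: "(\<Sum>t0\<in>Tys. \<Sum>t1\<in>Tys. \<Sum>t2\<in>Tys. Tv H N M t0 * Tv H N M t1 * Tv H N M t2 * sumS (Gt q (True,True,True) t0 t1 t2))
   = q * H^3 + 3 * H^3 + 6 * H^2 * N"
  unfolding Tys_def sumS_def Gt_def
  apply (simp add: Tv_def mg_def fct_def Mf_def stepm_def M0_def rhoT_def cls_def nb_def)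
  apply (simp add: algebra_simps power2_eq_square power3_eq_cube)
  done

lemma finN: "(\<Sum>t0\<in>Tys. \<Sum>t1\<in>Tys. \<Sum>t2\<in>Tys. Tv H N M t0 * Tv H N M t1 * Tv H N M t2 * sumS (Gt q (False,False,True) t0 t1 t2))
   = q * H^2 * N + H^3 + 7 * H^2 * N + H^2 * M + 7 * H * N^2"
  unfolding Tys_def sumS_def Gt_def
  apply (simp add: Tv_def mg_def fct_def Mf_def stepm_def M0_def rhoT_def cls_def nb_def)
  apply (simp add: algebra_simps power2_eq_square power3_eq_cube)
  done

lemma finM: "(\<Sum>t0\<in>Tys. \<Sum>t1\<in>Tys. \<Sum>t2\<in>Tys. Tv H N M t0 * Tv H N M t1 * Tv H N M t2 * sumS (Gt q (False,False,False) t0 t1 t2))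
   = 3 * q * H * N^2 + H^3 + 12 * H^2 * N + 3 * H^2 * M + 36 * H * N^2 + 12 * H * N * M + 14 * N^3"
  unfolding Tys_def sumS_def Gt_def
  apply (simp add: Tv_def mg_def fct_def Mf_def stepm_def M0_def rhoT_def cls_def nb_def)
  apply (simp add: algebra_simps power2_eq_square power3_eq_cube)
  done



definition pt :: "nat \<Rightarrow> nat \<Rightarrow> nat \<Rightarrow> nat list" where
  "pt m i j = i # replicate m j"

definition brs :: "nat \<Rightarrow> nat list set set" where
  "brs m = {{pt m 0 1, pt m 1 0}, {pt m 0 2, pt m 2 0}, {pt m 1 2, pt m 2 1}}"

lemma verts_0: "sigma_verts 0 = {[]}"
  unfolding sigma_verts_def by auto

lemma verts_Suc: "sigma_verts (Suc m) = Cons 0 ` sigma_verts m \<union> Cons 1 ` sigma_verts m \<union> Cons 2 ` sigma_verts m"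
proof (intro equalityI subsetI)
  fix w assume "w \<in> sigma_verts (Suc m)"
  then obtain i w' where w: "w = i # w'" "length w' = m" "set w' \<subseteq> {0,1,2}" "i \<in> {0,1,2}"
    unfolding sigma_verts_def by (cases w) auto
  then show "w \<in> Cons 0 ` sigma_verts m \<union> Cons 1 ` sigma_verts m \<union> Cons 2 ` sigma_verts m"
    unfolding sigma_verts_def by auto
qed (auto simp: sigma_verts_def)

lemma edges_Suc: "sigma_edges (Suc m) = imgE (Cons 0) (sigma_edges m) \<union> imgE (Cons 1) (sigma_edges m)
    \<union> imgE (Cons 2) (sigma_edges m) \<union> brs m"
proof (cases m)
  case 0 then show ?thesis by (auto simp: imgE_def brs_def pt_def)
next
  case (Suc k) then show ?thesis
    by (simp add: imgE_def brs_def pt_def left_v_def right_v_def top_v_def Un_assoc)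
qed

lemma finite_verts: "finite (sigma_verts m)"
  by (induction m) (auto simp: verts_0 verts_Suc)

lemma disj_cons: "i \<noteq> j \<Longrightarrow> Cons i ` X \<inter> Cons j ` Y = {}" by auto

lemma card_verts: "card (sigma_verts m) = 3 ^ m"
proof (induction m)
  case 0 then show ?case by (simp add: verts_0)
next
  case (Suc m)
  have f: "finite (Cons i ` sigma_verts m)" for i :: nat using finite_verts by blast
  have c: "card (Cons i ` sigma_verts m) = 3 ^ m" for i :: nat using Suc by (simp add: card_image)
  show ?case unfolding verts_Suc
    by (subst card_Un_disjoint, use f in auto)+ (use c in simp)
qed

lemma rep_in: "j < 3 \<Longrightarrow> replicate m j \<in> sigma_verts m"
  unfolding sigma_verts_def by auto

lemma pt_in: "i < 3 \<Longrightarrow> j < 3 \<Longrightarrow> pt m i j \<in> sigma_verts (Suc m)"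
  unfolding sigma_verts_def pt_def by auto

lemma wfE_Un: "wfE V A \<Longrightarrow> wfE V B \<Longrightarrow> wfE V (A \<union> B)" unfolding wfE_def by auto
lemma wfE_V: "wfE V A \<Longrightarrow> V \<subseteq> W \<Longrightarrow> wfE W A" unfolding wfE_def by fastforce
lemma wfE_Pow: "wfE V A \<Longrightarrow> A \<subseteq> Pow V" unfolding wfE_def by auto

lemma brs_ex: "i<3 \<Longrightarrow> j<3 \<Longrightarrow> i'<3 \<Longrightarrow> j'<3 \<Longrightarrow> i \<noteq> i' \<Longrightarrow>
   \<exists>a b. {pt m i j, pt m i' j'} = {a,b} \<and> a \<noteq> b \<and> a \<in> sigma_verts (Suc m) \<and> b \<in> sigma_verts (Suc m)"
  by (intro exI conjI refl pt_in) (auto simp: pt_def sigma_verts_def)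

lemma wf_brs: "wfE (sigma_verts (Suc m)) (brs m)"
  unfolding wfE_def brs_def using brs_ex[of 0 1 1 0 m] brs_ex[of 0 2 2 0 m] brs_ex[of 1 2 2 1 m] by auto

lemma wf_edges: "wfE (sigma_verts m) (sigma_edges m)"
proof (induction m)
  case 0 then show ?case by (simp add: wfE_def)
next
  case (Suc m)
  have inj: "inj_on (Cons i) X" for i :: nat and X by simp
  have "wfE (sigma_verts (Suc m)) (imgE (Cons i) (sigma_edges m))" if "i \<in> {0,1,2}" for i :: nat
    by (rule wfE_V[OF wfE_img[OF Suc inj]]) (use that in \<open>auto simp: verts_Suc\<close>)
  then show ?case unfolding edges_Suc using wf_brs by (intro wfE_Un) auto
qed

lemma finite_edges: "finite (sigma_edges m)"
  using wfE_Pow[OF wf_edges] finite_verts by (meson finite_Pow_iff finite_subset)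


definition ins :: "bool \<Rightarrow> 'a \<Rightarrow> 'a set \<Rightarrow> 'a set" where
  "ins s b X = (if s then insert b X else X)"

definition UU :: "nat list set set \<Rightarrow> nat list set set \<Rightarrow> nat list set set \<Rightarrow> nat list set set" where
  "UU A0 A1 A2 = imgE (Cons 0) A0 \<union> imgE (Cons 1) A1 \<union> imgE (Cons 2) A2"

definition glue :: "nat \<Rightarrow> nat list set set \<Rightarrow> nat list set set \<Rightarrow> nat list set set \<Rightarrow> ty \<Rightarrow> nat list set set" where
  "glue m A0 A1 A2 s = (case s of (s1,s2,s3) \<Rightarrow>
     ins s3 {pt m 1 2, pt m 2 1} (ins s2 {pt m 0 2, pt m 2 0} (ins s1 {pt m 0 1, pt m 1 0} (UU A0 A1 A2))))"

definition ct :: "nat \<Rightarrow> nat list set set \<Rightarrow> ty" where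
  "ct m A = (same_comp (sigma_verts m) A (replicate m 0) (replicate m 1),
             same_comp (sigma_verts m) A (replicate m 0) (replicate m 2),
             same_comp (sigma_verts m) A (replicate m 1) (replicate m 2))"

definition Inv :: "nat \<Rightarrow> nat list set set \<Rightarrow> (nat \<times> nat \<Rightarrow> nat \<times> nat \<Rightarrow> bool) \<Rightarrow> bool" where
  "Inv m X mdl \<longleftrightarrow> (\<forall>i<3. \<forall>j<3. \<forall>i'<3. \<forall>j'<3.
      same_comp (sigma_verts (Suc m)) X (pt m i j) (pt m i' j') = mdl (i,j) (i',j'))"

lemma lt3: "(j::nat) < 3 \<longleftrightarrow> j = 0 \<or> j = 1 \<or> j = 2" by auto

lemma rho_sc:
  assumes r: "\<And>j. j < 3 \<Longrightarrow> r j \<in> V" and j: "j < 3" and j': "j' < 3"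
  shows "rhoT (same_comp V A (r 0) (r 1), same_comp V A (r 0) (r 2), same_comp V A (r 1) (r 2)) j j'
         = same_comp V A (r j) (r j')"
proof -
  have "r 0 \<in> V" "r 1 \<in> V" "r 2 \<in> V" using r by auto
  then show ?thesis using j j' unfolding lt3 rhoT_def
    by (auto simp: same_comp_refl dest: same_comp_sym)
qed

lemma rho_ct: "j < 3 \<Longrightarrow> j' < 3 \<Longrightarrow> rhoT (ct m A) j j' = same_comp (sigma_verts m) A (replicate m j) (replicate m j')"
  unfolding ct_def by (rule rho_sc[where r = "\<lambda>j. replicate m j"]) (auto intro: rep_in)

lemma sc_cons:
  assumes w: "wfE (sigma_verts m) A" and a: "a < 3" and a': "a' < 3" and j: "j < 3" and j': "j' < 3"
  shows "same_comp (Cons i ` sigma_verts m) (imgE (Cons i) A) (pt m a j) (pt m a' j')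
     \<longleftrightarrow> a = i \<and> a' = i \<and> same_comp (sigma_verts m) A (replicate m j) (replicate m j')"
proof (cases "a = i \<and> a' = i")
  case True
  then show ?thesis unfolding pt_def
    using same_comp_img[OF w _ rep_in[OF j] rep_in[OF j'], of "Cons i"] by simp
next
  case False
  then have "\<not> (pt m a j \<in> Cons i ` sigma_verts m \<and> pt m a' j' \<in> Cons i ` sigma_verts m)"
    unfolding pt_def by auto
  then show ?thesis using False same_comp_in[of "Cons i ` sigma_verts m" "imgE (Cons i) A" "pt m a j" "pt m a' j'"]
    by blast
qed

lemma subE_wf: "A \<subseteq> sigma_edges m \<Longrightarrow> wfE (sigma_verts m) A"
  using wfE_mono wf_edges by blast

lemma UU_parts:
  assumes A: "A0 \<subseteq> sigma_edges m" "A1 \<subseteq> sigma_edges m" "A2 \<subseteq> sigma_edges m"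
  shows "same_comp (sigma_verts (Suc m)) (UU A0 A1 A2) x y \<longleftrightarrow>
     same_comp (Cons 0 ` sigma_verts m) (imgE (Cons 0) A0) x y \<or>
     same_comp (Cons 1 ` sigma_verts m) (imgE (Cons 1) A1) x y \<or>
     same_comp (Cons 2 ` sigma_verts m) (imgE (Cons 2) A2) x y"
    and "ncomp (sigma_verts (Suc m)) (UU A0 A1 A2) =
       ncomp (sigma_verts m) A0 + ncomp (sigma_verts m) A1 + ncomp (sigma_verts m) A2"
proof -
  have inj: "inj_on (Cons i) X" for i :: nat and X by simp
  have w: "wfE (Cons i ` sigma_verts m) (imgE (Cons i) A)" if "A \<subseteq> sigma_edges m" for i A
    using wfE_img[OF subE_wf[OF that] inj] .
  have w01: "wfE (Cons 0 ` sigma_verts m \<union> Cons 1 ` sigma_verts m) (imgE (Cons 0) A0 \<union> imgE (Cons 1) A1)"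
    by (rule wfE_Un; rule wfE_V[OF w]) (use A in auto)
  have d1: "Cons 0 ` sigma_verts m \<inter> Cons 1 ` sigma_verts m = {}" by auto
  have d2: "(Cons 0 ` sigma_verts m \<union> Cons 1 ` sigma_verts m) \<inter> Cons 2 ` sigma_verts m = {}" by auto
  show "same_comp (sigma_verts (Suc m)) (UU A0 A1 A2) x y \<longleftrightarrow>
     same_comp (Cons 0 ` sigma_verts m) (imgE (Cons 0) A0) x y \<or>
     same_comp (Cons 1 ` sigma_verts m) (imgE (Cons 1) A1) x y \<or>
     same_comp (Cons 2 ` sigma_verts m) (imgE (Cons 2) A2) x y"
    unfolding UU_def verts_Suc same_comp_union[OF w01 w[OF A(3)] d2] same_comp_union[OF w[OF A(1)] w[OF A(2)] d1]
    by blast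
  have fi: "finite (Cons i ` sigma_verts m)" for i :: nat using finite_verts by blast
  show "ncomp (sigma_verts (Suc m)) (UU A0 A1 A2) =
       ncomp (sigma_verts m) A0 + ncomp (sigma_verts m) A1 + ncomp (sigma_verts m) A2"
    unfolding UU_def verts_Suc
    using ncomp_union[OF w01 w[OF A(3)] d2] ncomp_union[OF w[OF A(1)] w[OF A(2)] d1 fi fi]
      ncomp_img[OF subE_wf[OF A(1)] inj] ncomp_img[OF subE_wf[OF A(2)] inj] ncomp_img[OF subE_wf[OF A(3)] inj]
      fi by simp
qed

lemma Inv_UU:
  assumes A: "A0 \<subseteq> sigma_edges m" "A1 \<subseteq> sigma_edges m" "A2 \<subseteq> sigma_edges m"
  shows "Inv m (UU A0 A1 A2) (M0 (ct m A0) (ct m A1) (ct m A2))"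
  unfolding Inv_def
proof (intro allI impI)
  fix i j i' j' :: nat
  assume h: "i < 3" "j < 3" "i' < 3" "j' < 3"
  note s = sc_cons[OF subE_wf[OF A(1)] h(1,3,2,4)] sc_cons[OF subE_wf[OF A(2)] h(1,3,2,4)]
    sc_cons[OF subE_wf[OF A(3)] h(1,3,2,4)]
  show "same_comp (sigma_verts (Suc m)) (UU A0 A1 A2) (pt m i j) (pt m i' j') = M0 (ct m A0) (ct m A1) (ct m A2) (i, j) (i', j')"
    unfolding UU_parts(1)[OF A] s M0_def using h rho_ct[OF h(2,4)] unfolding lt3
    by auto
qed

lemma Inv_step:
  assumes I: "Inv m X mdl" and a: "a1 < 3" "a2 < 3" and b: "b1 < 3" "b2 < 3"
  shows "Inv m (ins s {pt m a1 a2, pt m b1 b2} X) (stepm mdl s (a1,a2) (b1,b2))"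
    and "ncomp (sigma_verts (Suc m)) (ins s {pt m a1 a2, pt m b1 b2} X) =
         ncomp (sigma_verts (Suc m)) X - (if s \<and> \<not> mdl (a1,a2) (b1,b2) then 1 else 0)"
proof -
  have pa: "pt m a1 a2 \<in> sigma_verts (Suc m)" and pb: "pt m b1 b2 \<in> sigma_verts (Suc m)"
    using pt_in a b by auto
  show "Inv m (ins s {pt m a1 a2, pt m b1 b2} X) (stepm mdl s (a1,a2) (b1,b2))"
    unfolding Inv_def ins_def stepm_def
  proof (intro allI impI)
    fix i j i' j' :: nat
    assume h: "i < 3" "j < 3" "i' < 3" "j' < 3"
    show "same_comp (sigma_verts (Suc m)) (if s then insert {pt m a1 a2, pt m b1 b2} X else X) (pt m i j) (pt m i' j') =
          (mdl (i, j) (i', j') \<or> s \<and> (mdl (i, j) (a1, a2) \<and> mdl (b1, b2) (i', j') \<or> mdl (i, j) (b1, b2) \<and> mdl (a1, a2) (i', j')))"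
      using same_comp_insert[OF pa pb] I h a b unfolding Inv_def by auto
  qed
  show "ncomp (sigma_verts (Suc m)) (ins s {pt m a1 a2, pt m b1 b2} X) =
         ncomp (sigma_verts (Suc m)) X - (if s \<and> \<not> mdl (a1,a2) (b1,b2) then 1 else 0)"
    unfolding ins_def using ncomp_insert[OF finite_verts pa pb] I a b unfolding Inv_def by auto
qed

lemma glue_Inv:
  assumes A: "A0 \<subseteq> sigma_edges m" "A1 \<subseteq> sigma_edges m" "A2 \<subseteq> sigma_edges m"
  shows "Inv m (glue m A0 A1 A2 s) (Mf (ct m A0) (ct m A1) (ct m A2) s)"
    and "ncomp (sigma_verts (Suc m)) (glue m A0 A1 A2 s) =
         ncomp (sigma_verts m) A0 + ncomp (sigma_verts m) A1 + ncomp (sigma_verts m) A2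
          - mg (ct m A0) (ct m A1) (ct m A2) s"
proof -
  obtain s1 s2 s3 where s: "s = (s1,s2,s3)" by (cases s) auto
  let ?M0 = "M0 (ct m A0) (ct m A1) (ct m A2)"
  note I0 = Inv_UU[OF A]
  let ?X1 = "ins s1 {pt m 0 1, pt m 1 0} (UU A0 A1 A2)"
  let ?X2 = "ins s2 {pt m 0 2, pt m 2 0} ?X1"
  let ?X3 = "ins s3 {pt m 1 2, pt m 2 1} ?X2"
  note I1 = Inv_step[OF I0, of 0 1 1 0 s1, simplified]
  note I2 = Inv_step[OF I1(1), of 0 2 2 0 s2, simplified]
  note I3 = Inv_step[OF I2(1), of 1 2 2 1 s3, simplified]
  show "Inv m (glue m A0 A1 A2 s) (Mf (ct m A0) (ct m A1) (ct m A2) s)"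
    using I3(1) unfolding glue_def Mf_def s by simp
  show "ncomp (sigma_verts (Suc m)) (glue m A0 A1 A2 s) =
         ncomp (sigma_verts m) A0 + ncomp (sigma_verts m) A1 + ncomp (sigma_verts m) A2
          - mg (ct m A0) (ct m A1) (ct m A2) s"
    unfolding glue_def s mg_def using I1(2) I2(2) I3(2) UU_parts(2)[OF A]
    by (simp add: diff_diff_left)
qed

lemma rep_Suc_pt: "replicate (Suc m) j = pt m j j" unfolding pt_def by simp

lemma glue_ct:
  assumes A: "A0 \<subseteq> sigma_edges m" "A1 \<subseteq> sigma_edges m" "A2 \<subseteq> sigma_edges m"
  shows "ct (Suc m) (glue m A0 A1 A2 s) = fct (ct m A0) (ct m A1) (ct m A2) s"
proof -
  note I = glue_Inv(1)[OF A, of s]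
  have D: "same_comp (sigma_verts (Suc m)) (glue m A0 A1 A2 s) (pt m i j) (pt m i' j') = Mf (ct m A0) (ct m A1) (ct m A2) s (i,j) (i',j')"
    if "i < 3" "j < 3" "i' < 3" "j' < 3" for i j i' j'
    using I that unfolding Inv_def by blast
  show ?thesis unfolding ct_def[of "Suc m"] fct_def rep_Suc_pt using D[of 0 0 1 1] D[of 0 0 2 2] D[of 1 1 2 2] by simp
qed


lemma ne_of_sub: "A \<subseteq> sigma_edges m \<Longrightarrow> e \<in> A \<Longrightarrow> e \<noteq> {}"
  using wf_edges[of m] unfolding wfE_def by blast

lemma imgE_cons_mem: "e \<noteq> {} \<Longrightarrow> Cons i ` e \<in> imgE (Cons j) A \<longleftrightarrow> i = j \<and> e \<in> A"
proof
  assume ne: "e \<noteq> {}" and h: "Cons i ` e \<in> imgE (Cons j) A"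
  then obtain e' where e': "e' \<in> A" "Cons i ` e = Cons j ` e'" unfolding imgE_def by auto
  obtain x where "x \<in> e" using ne by blast
  then have "i # x \<in> Cons j ` e'" using e' by blast
  then have ij: "i = j" by auto
  then have "e = e'" using e'(2) by (simp add: inj_image_eq_iff)
  then show "i = j \<and> e \<in> A" using ij e' by simp
qed (auto simp: imgE_def)

lemma two_heads: "{i # x, j # y} \<in> imgE (Cons k) A \<Longrightarrow> i = j"
  unfolding imgE_def by (auto simp: doubleton_eq_iff) (metis imageE insertI1 insert_commute list.inject)+

lemma br_notin_UU: "i \<noteq> j \<Longrightarrow> {i # x, j # y} \<notin> UU A0 A1 A2"
  unfolding UU_def by (auto dest: two_heads)

lemma ins_mem: "y \<in> ins s b X \<longleftrightarrow> (s \<and> y = b) \<or> y \<in> X"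
  unfolding ins_def by auto

lemma card_ins: "finite X \<Longrightarrow> b \<notin> X \<Longrightarrow> card (ins s b X) = card X + (if s then 1 else 0)"
  unfolding ins_def by auto

lemma finite_ins: "finite X \<Longrightarrow> finite (ins s b X)"
  unfolding ins_def by auto

lemma imgE_disj: "{} \<notin> A \<Longrightarrow> i \<noteq> j \<Longrightarrow> imgE (Cons i) A \<inter> imgE (Cons j) B = {}"
proof -
  assume ne: "{} \<notin> A" and ij: "i \<noteq> j"
  have "x \<notin> imgE (Cons j) B" if xA: "x \<in> imgE (Cons i) A" for x
  proof -
    obtain e where e: "e \<in> A" "x = Cons i ` e" using xA unfolding imgE_def by blast
    then have "e \<noteq> {}" using ne by auto
    then show ?thesis using imgE_cons_mem[of e i j B] e ij by simp
  qed
  then show ?thesis by blast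
qed

lemma finite_imgE: "finite A \<Longrightarrow> finite (imgE f A)" unfolding imgE_def by simp

lemma card_UU:
  assumes A: "A0 \<subseteq> sigma_edges m" "A1 \<subseteq> sigma_edges m" "A2 \<subseteq> sigma_edges m"
  shows "card (UU A0 A1 A2) = card A0 + card A1 + card A2" and "finite (UU A0 A1 A2)"
proof -
  have f: "finite A0" "finite A1" "finite A2" using A finite_edges finite_subset by blast+
  have ne: "{} \<notin> A0" "{} \<notin> A1" "{} \<notin> A2" using ne_of_sub A by blast+
  have inj: "inj_on (Cons i) X" for i :: nat and X by simp
  have c: "card (imgE (Cons i) A) = card A" if "A \<subseteq> sigma_edges m" for i A
    using card_imgE[OF subE_wf[OF that] inj] .
  have d1: "imgE (Cons 0) A0 \<inter> imgE (Cons 1) A1 = {}" using imgE_disj[OF ne(1), of 0 1 A1] by simp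
  have d2: "(imgE (Cons 0) A0 \<union> imgE (Cons 1) A1) \<inter> imgE (Cons 2) A2 = {}"
    using imgE_disj[OF ne(1), of 0 2 A2] imgE_disj[OF ne(2), of 1 2 A2] by auto
  show "finite (UU A0 A1 A2)" unfolding UU_def using f by (simp add: finite_imgE)
  show "card (UU A0 A1 A2) = card A0 + card A1 + card A2"
    unfolding UU_def
    by (subst card_Un_disjoint, use f d2 in \<open>auto simp: finite_imgE\<close>)
       (subst card_Un_disjoint, use f d1 A c in \<open>auto simp: finite_imgE\<close>)
qed

lemma br_neq: "{pt m 0 1, pt m 1 0} \<noteq> {pt m 0 2, pt m 2 0}" "{pt m 0 1, pt m 1 0} \<noteq> {pt m 1 2, pt m 2 1}"
  "{pt m 0 2, pt m 2 0} \<noteq> {pt m 1 2, pt m 2 1}"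
  unfolding pt_def by (auto simp: doubleton_eq_iff)

lemma br_neq': "{pt m 0 2, pt m 2 0} \<noteq> {pt m 0 1, pt m 1 0}" "{pt m 1 2, pt m 2 1} \<noteq> {pt m 0 1, pt m 1 0}"
  "{pt m 1 2, pt m 2 1} \<noteq> {pt m 0 2, pt m 2 0}"
  unfolding pt_def by (auto simp: doubleton_eq_iff)

lemma br_notin: "{pt m a b, pt m c d} \<notin> UU A0 A1 A2" if "a \<noteq> c" for a b c d
  unfolding pt_def using br_notin_UU that by blast

lemma card_glue:
  assumes A: "A0 \<subseteq> sigma_edges m" "A1 \<subseteq> sigma_edges m" "A2 \<subseteq> sigma_edges m"
  shows "card (glue m A0 A1 A2 s) = card A0 + card A1 + card A2 + nb s"
proof -
  obtain s1 s2 s3 where s: "s = (s1,s2,s3)" by (cases s) auto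
  note U = card_UU[OF A]
  have n1: "{pt m 0 1, pt m 1 0} \<notin> UU A0 A1 A2" by (rule br_notin) simp
  have n2: "{pt m 0 2, pt m 2 0} \<notin> ins s1 {pt m 0 1, pt m 1 0} (UU A0 A1 A2)"
    using br_notin[of 0 2 m 2 0] br_neq br_neq' unfolding ins_mem by auto
  have n3: "{pt m 1 2, pt m 2 1} \<notin> ins s2 {pt m 0 2, pt m 2 0} (ins s1 {pt m 0 1, pt m 1 0} (UU A0 A1 A2))"
    using br_notin[of 1 2 m 2 1] br_neq br_neq' unfolding ins_mem by auto
  show ?thesis unfolding glue_def s nb_def
    using U n1 n2 n3 by (simp add: card_ins finite_ins)
qed

lemma glue_sub:
  assumes A: "A0 \<subseteq> sigma_edges m" "A1 \<subseteq> sigma_edges m" "A2 \<subseteq> sigma_edges m"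
  shows "glue m A0 A1 A2 s \<subseteq> sigma_edges (Suc m)"
proof -
  obtain s1 s2 s3 where s: "s = (s1,s2,s3)" by (cases s) auto
  have "imgE (Cons i) A \<subseteq> imgE (Cons i) (sigma_edges m)" if "A \<subseteq> sigma_edges m" for i A
    using that unfolding imgE_def by blast
  then have "UU A0 A1 A2 \<subseteq> sigma_edges (Suc m)" unfolding UU_def edges_Suc using A by blast
  moreover have "brs m \<subseteq> sigma_edges (Suc m)" unfolding edges_Suc by blast
  ultimately show ?thesis unfolding glue_def s ins_def brs_def by auto
qed

lemma glue_mem: "x \<in> glue m A0 A1 A2 (s1,s2,s3) \<longleftrightarrow>
   (s1 \<and> x = {pt m 0 1, pt m 1 0}) \<or> (s2 \<and> x = {pt m 0 2, pt m 2 0}) \<or> (s3 \<and> x = {pt m 1 2, pt m 2 1})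
   \<or> x \<in> UU A0 A1 A2"
  unfolding glue_def by (auto simp: ins_mem)

definition proj :: "nat \<Rightarrow> nat \<Rightarrow> nat list set set \<Rightarrow> nat list set set" where
  "proj m i X = {e \<in> sigma_edges m. Cons i ` e \<in> X}"

lemma cons_not_br: "e \<noteq> {} \<Longrightarrow> a \<noteq> c \<Longrightarrow> Cons i ` e \<noteq> {pt m a b, pt m c d}"
  unfolding pt_def by (metis image_iff insertI1 insert_commute list.inject)

lemma proj_glue:
  assumes A: "A0 \<subseteq> sigma_edges m" "A1 \<subseteq> sigma_edges m" "A2 \<subseteq> sigma_edges m"
  shows "proj m 0 (glue m A0 A1 A2 s) = A0" "proj m 1 (glue m A0 A1 A2 s) = A1" "proj m 2 (glue m A0 A1 A2 s) = A2"
proof -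
  obtain s1 s2 s3 where s: "s = (s1,s2,s3)" by (cases s) auto
  have key: "Cons i ` e \<in> glue m A0 A1 A2 s \<longleftrightarrow> Cons i ` e \<in> UU A0 A1 A2" if e: "e \<in> sigma_edges m" for e i
  proof -
    have ne: "e \<noteq> {}" by (rule ne_of_sub[OF subset_refl e])
    have "Cons i ` e \<noteq> {pt m 0 1, pt m 1 0}" "Cons i ` e \<noteq> {pt m 0 2, pt m 2 0}" "Cons i ` e \<noteq> {pt m 1 2, pt m 2 1}"
      by (rule cons_not_br[OF ne], simp)+
    then show ?thesis unfolding s glue_mem by auto
  qed
  have k2: "Cons i ` e \<in> UU A0 A1 A2 \<longleftrightarrow> (i = 0 \<and> e \<in> A0) \<or> (i = 1 \<and> e \<in> A1) \<or> (i = 2 \<and> e \<in> A2)" if e: "e \<in> sigma_edges m" for e i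
  proof -
    have ne: "e \<noteq> {}" by (rule ne_of_sub[OF subset_refl e])
    show ?thesis unfolding UU_def using imgE_cons_mem[OF ne] by auto
  qed
  show "proj m 0 (glue m A0 A1 A2 s) = A0" "proj m 1 (glue m A0 A1 A2 s) = A1" "proj m 2 (glue m A0 A1 A2 s) = A2"
    unfolding proj_def using key k2 A by auto
qed

lemma br_glue:
  assumes A: "A0 \<subseteq> sigma_edges m" "A1 \<subseteq> sigma_edges m" "A2 \<subseteq> sigma_edges m"
  shows "({pt m 0 1, pt m 1 0} \<in> glue m A0 A1 A2 s, {pt m 0 2, pt m 2 0} \<in> glue m A0 A1 A2 s,
          {pt m 1 2, pt m 2 1} \<in> glue m A0 A1 A2 s) = s"
proof -
  obtain s1 s2 s3 where s: "s = (s1,s2,s3)" by (cases s) auto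
  show ?thesis unfolding s glue_mem using br_neq br_neq' br_notin[of 0 1 m] br_notin[of 0 2 m] br_notin[of 1 2 m]
    by auto
qed

lemma glue_proj:
  assumes X: "X \<subseteq> sigma_edges (Suc m)"
  shows "glue m (proj m 0 X) (proj m 1 X) (proj m 2 X)
     ({pt m 0 1, pt m 1 0} \<in> X, {pt m 0 2, pt m 2 0} \<in> X, {pt m 1 2, pt m 2 1} \<in> X) = X"
proof (intro equalityI subsetI)
  fix x assume "x \<in> glue m (proj m 0 X) (proj m 1 X) (proj m 2 X)
     ({pt m 0 1, pt m 1 0} \<in> X, {pt m 0 2, pt m 2 0} \<in> X, {pt m 1 2, pt m 2 1} \<in> X)"
  then show "x \<in> X" unfolding glue_mem UU_def proj_def imgE_def by auto
next
  fix x assume x: "x \<in> X"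
  then have "x \<in> sigma_edges (Suc m)" using X by blast
  then consider (c) i e where "i \<in> {0,1,2}" "e \<in> sigma_edges m" "x = Cons i ` e" | (b) "x \<in> brs m"
    unfolding edges_Suc imgE_def by blast
  then show "x \<in> glue m (proj m 0 X) (proj m 1 X) (proj m 2 X)
     ({pt m 0 1, pt m 1 0} \<in> X, {pt m 0 2, pt m 2 0} \<in> X, {pt m 1 2, pt m 2 1} \<in> X)"
  proof cases
    case c
    then have "e \<in> proj m i X" unfolding proj_def using x by auto
    then have "x \<in> UU (proj m 0 X) (proj m 1 X) (proj m 2 X)" using c unfolding UU_def imgE_def by auto
    then show ?thesis unfolding glue_mem by auto
  next
    case b then show ?thesis unfolding glue_mem brs_def using x by auto
  qed
qed

lemma sum_glue:
  fixes g :: "nat list set set \<Rightarrow> real"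
  shows "(\<Sum>X\<in>Pow (sigma_edges (Suc m)). g X) =
    (\<Sum>A0\<in>Pow (sigma_edges m). \<Sum>A1\<in>Pow (sigma_edges m). \<Sum>A2\<in>Pow (sigma_edges m). \<Sum>s\<in>UNIV.
        g (glue m A0 A1 A2 s))"
proof -
  let ?D = "Pow (sigma_edges m) \<times> Pow (sigma_edges m) \<times> Pow (sigma_edges m) \<times> (UNIV :: ty set)"
  let ?i = "\<lambda>(A0,A1,A2,s). glue m A0 A1 A2 s"
  let ?j = "\<lambda>X. (proj m 0 X, proj m 1 X, proj m 2 X,
       ({pt m 0 1, pt m 1 0} \<in> X, {pt m 0 2, pt m 2 0} \<in> X, {pt m 1 2, pt m 2 1} \<in> X))"
  have "(\<Sum>X\<in>Pow (sigma_edges (Suc m)). g X) = (\<Sum>z\<in>?D. g (?i z))"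
  proof (rule sum.reindex_bij_witness[where i = ?i and j = ?j])
    fix X assume "X \<in> Pow (sigma_edges (Suc m))"
    then show "?i (?j X) = X" using glue_proj by auto
    show "?j X \<in> ?D" unfolding proj_def by auto
  next
    fix z assume z: "z \<in> ?D"
    then obtain A0 A1 A2 s where zz: "z = (A0,A1,A2,s)" "A0 \<subseteq> sigma_edges m" "A1 \<subseteq> sigma_edges m" "A2 \<subseteq> sigma_edges m"
      by auto
    show "?j (?i z) = z" using proj_glue[OF zz(2-4)] br_glue[OF zz(2-4)] zz(1) by simp
    show "?i z \<in> Pow (sigma_edges (Suc m))" using glue_sub[OF zz(2-4)] zz(1) by simp
  next
    fix X assume "X \<in> Pow (sigma_edges (Suc m))"
    then show "g (?i (?j X)) = g X" using glue_proj by auto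
  qed
  also have "\<dots> = (\<Sum>A0\<in>Pow (sigma_edges m). \<Sum>A1\<in>Pow (sigma_edges m). \<Sum>A2\<in>Pow (sigma_edges m). \<Sum>s\<in>UNIV.
        g (glue m A0 A1 A2 s))"
    by (simp add: sum.cartesian_product')
  finally show ?thesis .
qed


definition nul :: "nat \<Rightarrow> nat list set set \<Rightarrow> nat" where
  "nul m A = card A + ncomp (sigma_verts m) A - card (sigma_verts m)"

definition good :: "nat \<Rightarrow> nat list set set \<Rightarrow> bool" where
  "good m A \<longleftrightarrow> ncomp (sigma_verts m) A = cls (ct m A)"

definition Ts :: "real \<Rightarrow> nat \<Rightarrow> ty \<Rightarrow> real" where
  "Ts q m t = (\<Sum>A\<in>{A. A \<subseteq> sigma_edges m \<and> good m A \<and> ct m A = t}. q ^ nul m A)"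

lemma ct_Tys: "ct m A \<in> Tys"
proof -
  let ?s = "same_comp (sigma_verts m) A"
  let ?r = "replicate m"
  have "?s (?r 0) (?r 1) \<Longrightarrow> ?s (?r 0) (?r 2) \<Longrightarrow> ?s (?r 1) (?r 2)"
    "?s (?r 0) (?r 1) \<Longrightarrow> ?s (?r 1) (?r 2) \<Longrightarrow> ?s (?r 0) (?r 2)"
    "?s (?r 0) (?r 2) \<Longrightarrow> ?s (?r 1) (?r 2) \<Longrightarrow> ?s (?r 0) (?r 1)"
    by (meson same_comp_sym same_comp_trans)+
  then show ?thesis unfolding ct_def Tys_def by auto
qed

lemma cls_le: "cls (ct m A) \<le> ncomp (sigma_verts m) A"
proof -
  let ?s = "same_comp (sigma_verts m) A"
  let ?r = "replicate m"
  have r: "?r 0 \<in> sigma_verts m" "?r 1 \<in> sigma_verts m" "?r 2 \<in> sigma_verts m" by (auto intro: rep_in)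
  have ne: "sigma_verts m \<noteq> {}" using r by blast
  have "?s (?r 0) (?r 1) \<Longrightarrow> ?s (?r 0) (?r 2) \<Longrightarrow> ?s (?r 1) (?r 2)"
    by (meson same_comp_sym same_comp_trans)
  note ge1 = ncomp_ge1[OF finite_verts ne, of A]
  note ge2 = ncomp_ge2[OF finite_verts, where A=A]
  note ge3 = ncomp_ge3[OF finite_verts r]
  show ?thesis unfolding ct_def cls_def using ge1 ge2[OF r(1) r(2)] ge2[OF r(1) r(3)] ge3
    by auto
qed

lemma forest_m: "A \<subseteq> sigma_edges m \<Longrightarrow> card (sigma_verts m) \<le> card A + ncomp (sigma_verts m) A"
  by (rule forest_bound) (auto intro: finite_subset[OF _ finite_edges] finite_verts subE_wf)

lemma fin_ineq':
  assumes "t0 \<in> Tys" "t1 \<in> Tys" "t2 \<in> Tys"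
  shows "mg t0 t1 t2 s + cls (fct t0 t1 t2 s) \<le> cls t0 + cls t1 + cls t2" "mg t0 t1 t2 s \<le> nb s"
proof -
  obtain s1 s2 s3 where s: "s = (s1,s2,s3)" by (cases s) auto
  note f = fin_ineq[rule_format, OF assms, of s1 s2 s3]
  show "mg t0 t1 t2 s + cls (fct t0 t1 t2 s) \<le> cls t0 + cls t1 + cls t2" "mg t0 t1 t2 s \<le> nb s"
    using f s by auto
qed

lemma cls_pos: "cls t \<ge> 1" unfolding cls_def by (auto split: prod.splits)

lemma pointwise:
  assumes A: "A0 \<subseteq> sigma_edges m" "A1 \<subseteq> sigma_edges m" "A2 \<subseteq> sigma_edges m"
  shows "(if good (Suc m) (glue m A0 A1 A2 s) \<and> ct (Suc m) (glue m A0 A1 A2 s) = tX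
            then q ^ nul (Suc m) (glue m A0 A1 A2 s) else 0)
      = (if good m A0 then q ^ nul m A0 else 0) * (if good m A1 then q ^ nul m A1 else 0)
        * (if good m A2 then q ^ nul m A2 else 0) * Gt q tX (ct m A0) (ct m A1) (ct m A2) s"
proof -
  let ?G = "glue m A0 A1 A2 s"
  let ?t0 = "ct m A0" and ?t1 = "ct m A1" and ?t2 = "ct m A2"
  define k0 where "k0 = ncomp (sigma_verts m) A0"
  define k1 where "k1 = ncomp (sigma_verts m) A1"
  define k2 where "k2 = ncomp (sigma_verts m) A2"
  define c0 where "c0 = cls ?t0"
  define c1 where "c1 = cls ?t1"
  define c2 where "c2 = cls ?t2"
  define M where "M = mg ?t0 ?t1 ?t2 s"
  define F where "F = fct ?t0 ?t1 ?t2 s"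
  define v where "v = card (sigma_verts m)"
  have kc: "c0 \<le> k0" "c1 \<le> k1" "c2 \<le> k2" unfolding k0_def k1_def k2_def c0_def c1_def c2_def by (rule cls_le)+
  have fi: "M + cls F \<le> c0 + c1 + c2" "M \<le> nb s"
    unfolding M_def F_def c0_def c1_def c2_def using fin_ineq' ct_Tys by blast+
  have cF: "cls F \<ge> 1" by (rule cls_pos)
  have kG: "ncomp (sigma_verts (Suc m)) ?G = k0 + k1 + k2 - M"
    unfolding k0_def k1_def k2_def M_def by (rule glue_Inv(2)[OF A])
  have ctG: "ct (Suc m) ?G = F" unfolding F_def by (rule glue_ct[OF A])
  have cG: "card ?G = card A0 + card A1 + card A2 + nb s" by (rule card_glue[OF A])
  have vS: "card (sigma_verts (Suc m)) = 3 * v" unfolding v_def card_verts by simp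
  have fo: "v \<le> card A0 + k0" "v \<le> card A1 + k1" "v \<le> card A2 + k2"
    unfolding v_def k0_def k1_def k2_def using forest_m A by blast+
  have goodG: "good (Suc m) ?G \<and> ct (Suc m) ?G = tX \<longleftrightarrow> k0 + k1 + k2 - M = cls tX \<and> F = tX"
    unfolding good_def kG ctG by auto
  show ?thesis
  proof (cases "good m A0 \<and> good m A1 \<and> good m A2")
    case True
    then have e: "k0 = c0" "k1 = c1" "k2 = c2" unfolding good_def k0_def k1_def k2_def c0_def c1_def c2_def by auto
    have nG: "nul (Suc m) ?G = nul m A0 + nul m A1 + nul m A2 + (nb s - M)"
      unfolding nul_def cG kG vS using fo fi cF e unfolding k0_def k1_def k2_def v_def by linarith
    show ?thesis using True unfolding goodG Gt_def nG
      by (auto simp: power_add e c0_def c1_def c2_def M_def F_def)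
  next
    case False
    then have "c0 + c1 + c2 < k0 + k1 + k2" using kc unfolding good_def k0_def k1_def k2_def c0_def c1_def c2_def
      by auto
    then have "\<not> (k0 + k1 + k2 - M = cls tX \<and> F = tX)" using fi by auto
    then show ?thesis using False unfolding goodG by auto
  qed
qed

lemma grouping:
  fixes h :: "ty \<Rightarrow> real"
  shows "(\<Sum>A\<in>Pow (sigma_edges m). (if good m A then q ^ nul m A else 0) * h (ct m A)) = (\<Sum>t\<in>Tys. Ts q m t * h t)"
proof -
  let ?S = "{A \<in> Pow (sigma_edges m). good m A}"
  have fP: "finite (Pow (sigma_edges m))" using finite_edges by simp
  have fS: "finite ?S" using fP by simp
  have fT: "finite Tys" unfolding Tys_def by simp
  have "(\<Sum>A\<in>Pow (sigma_edges m). (if good m A then q ^ nul m A else 0) * h (ct m A))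
      = (\<Sum>A\<in>Pow (sigma_edges m). if good m A then q ^ nul m A * h (ct m A) else 0)"
    by (rule sum.cong) auto
  also have "\<dots> = (\<Sum>A\<in>?S. q ^ nul m A * h (ct m A))"
    using sum.inter_filter[OF fP, of "\<lambda>A. q ^ nul m A * h (ct m A)" "good m"] by simp
  also have "\<dots> = (\<Sum>t\<in>Tys. \<Sum>A\<in>{x. x \<in> ?S \<and> ct m x = t}. q ^ nul m A * h (ct m A))"
    by (rule sum.group[symmetric, OF fS fT]) (use ct_Tys in blast)
  also have "\<dots> = (\<Sum>t\<in>Tys. Ts q m t * h t)"
  proof (rule sum.cong[OF refl])
    fix t assume "t \<in> Tys"
    have "(\<Sum>A\<in>{x. x \<in> ?S \<and> ct m x = t}. q ^ nul m A * h (ct m A)) = (\<Sum>A\<in>{x. x \<in> ?S \<and> ct m x = t}. q ^ nul m A * h t)"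
      by (rule sum.cong) auto
    also have "\<dots> = Ts q m t * h t" unfolding Ts_def sum_distrib_right[symmetric]
      by (rule arg_cong[where f = "\<lambda>x. x * h t"], rule sum.cong) auto
    finally show "(\<Sum>A\<in>{x. x \<in> ?S \<and> ct m x = t}. q ^ nul m A * h (ct m A)) = Ts q m t * h t" .
  qed
  finally show ?thesis .
qed

lemma recursion:
  "Ts q (Suc m) tX = (\<Sum>t0\<in>Tys. Ts q m t0 * (\<Sum>t1\<in>Tys. Ts q m t1 * (\<Sum>t2\<in>Tys. Ts q m t2 *
       (\<Sum>s\<in>UNIV. Gt q tX t0 t1 t2 s))))"
proof -
  let ?I = "\<lambda>A. if good m A then q ^ nul m A else (0::real)"
  let ?P = "Pow (sigma_edges m)"
  have fP: "finite (Pow (sigma_edges (Suc m)))" using finite_edges by simp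
  have "Ts q (Suc m) tX = (\<Sum>X\<in>Pow (sigma_edges (Suc m)).
      if good (Suc m) X \<and> ct (Suc m) X = tX then q ^ nul (Suc m) X else 0)"
    unfolding Ts_def using sum.inter_filter[OF fP, of "\<lambda>X. q ^ nul (Suc m) X" "\<lambda>X. good (Suc m) X \<and> ct (Suc m) X = tX"]
    by (simp add: Pow_def conj_assoc)
  also have "\<dots> = (\<Sum>A0\<in>?P. \<Sum>A1\<in>?P. \<Sum>A2\<in>?P. \<Sum>s\<in>UNIV.
       ?I A0 * ?I A1 * ?I A2 * Gt q tX (ct m A0) (ct m A1) (ct m A2) s)"
    unfolding sum_glue by (intro sum.cong refl) (simp add: pointwise)
  also have "\<dots> = (\<Sum>A0\<in>?P. ?I A0 * (\<Sum>A1\<in>?P. ?I A1 * (\<Sum>A2\<in>?P. ?I A2 *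
       (\<Sum>s\<in>UNIV. Gt q tX (ct m A0) (ct m A1) (ct m A2) s))))"
    by (simp add: sum_distrib_left mult.assoc)
  also have "\<dots> = (\<Sum>A0\<in>?P. ?I A0 * (\<Sum>A1\<in>?P. ?I A1 * (\<Sum>t2\<in>Tys. Ts q m t2 *
       (\<Sum>s\<in>UNIV. Gt q tX (ct m A0) (ct m A1) t2 s))))"
    by (subst grouping) simp
  also have "\<dots> = (\<Sum>A0\<in>?P. ?I A0 * (\<Sum>t1\<in>Tys. Ts q m t1 * (\<Sum>t2\<in>Tys. Ts q m t2 *
       (\<Sum>s\<in>UNIV. Gt q tX (ct m A0) t1 t2 s))))"
    by (subst grouping) simp
  also have "\<dots> = (\<Sum>t0\<in>Tys. Ts q m t0 * (\<Sum>t1\<in>Tys. Ts q m t1 * (\<Sum>t2\<in>Tys. Ts q m t2 *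
       (\<Sum>s\<in>UNIV. Gt q tX t0 t1 t2 s))))"
    by (subst grouping) simp
  finally show ?thesis .
qed


definition sg :: "nat \<Rightarrow> nat" where "sg x = (x + 1) mod 3"
definition rot :: "nat list \<Rightarrow> nat list" where "rot w = map sg w"

lemma rot_Cons: "rot (i # w) = sg i # rot w" unfolding rot_def by simp
lemma rot_rep: "rot (replicate m j) = replicate m (sg j)" unfolding rot_def by simp
lemma rot_pt: "rot (pt m i j) = pt m (sg i) (sg j)" unfolding rot_def pt_def by simp

lemma rot_V_sub: "rot ` sigma_verts m \<subseteq> sigma_verts m"
  unfolding rot_def sigma_verts_def sg_def by auto

lemma sg_vals: "sg 0 = 1" "sg 1 = 2" "sg 2 = 0" "sg (Suc 0) = 2" by (simp_all add: sg_def)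

lemma rot3: assumes w: "w \<in> sigma_verts m" shows "rot (rot (rot w)) = w"
  unfolding rot_def map_map
  by (rule map_idI) (use w in \<open>auto simp: sigma_verts_def sg_def\<close>)

lemma rot_V: "rot ` sigma_verts m = sigma_verts m"
proof
  show "rot ` sigma_verts m \<subseteq> sigma_verts m" by (rule rot_V_sub)
  show "sigma_verts m \<subseteq> rot ` sigma_verts m"
  proof
    fix w assume w: "w \<in> sigma_verts m"
    have "rot (rot w) \<in> sigma_verts m" using rot_V_sub w by blast
    then show "w \<in> rot ` sigma_verts m" using rot3[OF w] by (metis image_eqI)
  qed
qed

lemma inj_rot: "inj_on rot (sigma_verts m)"
proof (rule inj_onI)
  fix x y assume "x \<in> sigma_verts m" "y \<in> sigma_verts m" "rot x = rot y"
  then show "x = y" using rot3 by metis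
qed

lemma imgE_comp: "imgE f (imgE g A) = imgE (f \<circ> g) A" unfolding imgE_def by (simp add: image_image image_comp)
lemma imgE_Un: "imgE f (A \<union> B) = imgE f A \<union> imgE f B" unfolding imgE_def by auto

lemma rot_edges: "imgE rot (sigma_edges m) = sigma_edges m"
proof (induction m)
  case 0 then show ?case by (simp add: imgE_def)
next
  case (Suc m)
  have c: "rot \<circ> Cons i = Cons (sg i) \<circ> rot" for i by (rule ext) (simp add: rot_Cons)
  have ci: "imgE rot (imgE (Cons i) (sigma_edges m)) = imgE (Cons (sg i)) (sigma_edges m)" for i
    by (simp only: imgE_comp c) (simp only: imgE_comp[symmetric] Suc)
  have b: "imgE rot (brs m) = brs m" unfolding brs_def imgE_def by (simp add: rot_pt sg_vals insert_commute)
  show ?case unfolding edges_Suc imgE_Un ci b sg_vals by auto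
qed

lemma ct_rot:
  assumes A: "A \<subseteq> sigma_edges m" and c: "ct m A = (a,b,c)"
  shows "ct m (imgE rot A) = (b,c,a)"
proof -
  note w = subE_wf[OF A]
  have sc: "same_comp (sigma_verts m) (imgE rot A) (rot x) (rot y) = same_comp (sigma_verts m) A x y"
    if "x \<in> sigma_verts m" "y \<in> sigma_verts m" for x y
    using same_comp_img[OF w inj_rot that] unfolding rot_V .
  have ri: "replicate m j \<in> sigma_verts m" if "j < 3" for j using rep_in that by blast
  have e1: "same_comp (sigma_verts m) (imgE rot A) (replicate m 0) (replicate m 1) = same_comp (sigma_verts m) A (replicate m 2) (replicate m 0)"
    using sc[OF ri[of 2] ri[of 0]] by (simp add: rot_rep sg_vals)
  have e2: "same_comp (sigma_verts m) (imgE rot A) (replicate m 0) (replicate m 2) = same_comp (sigma_verts m) A (replicate m 2) (replicate m 1)"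
    using sc[OF ri[of 2] ri[of 1]] by (simp add: rot_rep sg_vals)
  have e3: "same_comp (sigma_verts m) (imgE rot A) (replicate m 1) (replicate m 2) = same_comp (sigma_verts m) A (replicate m 0) (replicate m 1)"
    using sc[OF ri[of 0] ri[of 1]] by (simp add: rot_rep sg_vals)
  show ?thesis using c unfolding ct_def e1 e2 e3
    by (auto dest: same_comp_sym)
qed

lemma cls_rot: "(a,b,c) \<in> Tys \<Longrightarrow> cls (b,c,a) = cls (a,b,c)"
  unfolding Tys_def cls_def by auto

lemma rot_Tys: "(a,b,c) \<in> Tys \<Longrightarrow> (b,c,a) \<in> Tys" unfolding Tys_def by auto

lemma Ts_rot: "Ts q m (a,b,c) = Ts q m (b,c,a)"
proof -
  let ?S = "{A. A \<subseteq> sigma_edges m \<and> good m A \<and> ct m A = (a,b,c)}"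
  let ?S' = "{A. A \<subseteq> sigma_edges m \<and> good m A \<and> ct m A = (b,c,a)}"
  have injP: "inj_on (imgE rot) (Pow (sigma_edges m))"
    unfolding imgE_def
    by (rule inj_on_subset[OF inj_on_image_Pow[OF inj_on_image_Pow[OF inj_rot]]])
       (use wfE_Pow[OF wf_edges] in blast)
  have inj: "inj_on (imgE rot) ?S" by (rule inj_on_subset[OF injP]) auto
  have props: "imgE rot A \<subseteq> sigma_edges m \<and> ncomp (sigma_verts m) (imgE rot A) = ncomp (sigma_verts m) A
      \<and> card (imgE rot A) = card A" if A: "A \<subseteq> sigma_edges m" for A
  proof -
    have "imgE rot A \<subseteq> imgE rot (sigma_edges m)" using A unfolding imgE_def by blast
    then show ?thesis using rot_edges ncomp_img[OF subE_wf[OF A] inj_rot] card_imgE[OF subE_wf[OF A] inj_rot]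
      unfolding rot_V by simp
  qed
  have gd: "good m (imgE rot A) = good m A" if A: "A \<subseteq> sigma_edges m" for A
  proof -
    obtain x y z where c: "ct m A = (x,y,z)" by (cases "ct m A") auto
    then have "(x,y,z) \<in> Tys" using ct_Tys by metis
    then show ?thesis unfolding good_def using props[OF A] ct_rot[OF A c] c cls_rot by simp
  qed
  have nl: "nul m (imgE rot A) = nul m A" if A: "A \<subseteq> sigma_edges m" for A
    unfolding nul_def using props[OF A] by simp
  have eq: "?S' = imgE rot ` ?S"
  proof (intro equalityI subsetI)
    fix A' assume A': "A' \<in> ?S'"
    then have "A' \<subseteq> imgE rot (sigma_edges m)" using rot_edges by simp
    then obtain A where A: "A \<subseteq> sigma_edges m" "A' = imgE rot A" unfolding imgE_def by (auto simp: subset_image_iff)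
    obtain x y z where c: "ct m A = (x,y,z)" by (cases "ct m A") auto
    have "(b,c,a) = (y,z,x)" using ct_rot[OF A(1) c] A' A(2) by simp
    then have "ct m A = (a,b,c)" using c by simp
    moreover have "good m A" using gd[OF A(1)] A' A(2) by simp
    ultimately show "A' \<in> imgE rot ` ?S" using A by blast
  next
    fix A' assume "A' \<in> imgE rot ` ?S"
    then obtain A where A: "A \<in> ?S" "A' = imgE rot A" by blast
    then show "A' \<in> ?S'" using props gd ct_rot by auto
  qed
  show ?thesis unfolding Ts_def eq sum.reindex[OF inj] by (rule sum.cong) (auto simp: nl)
qed


lemma sum_UNIV_ty: "(\<Sum>s\<in>(UNIV::ty set). f s) = sumS f"
proof -
  have u: "(UNIV::ty set) = {(False, False, False), (False, False, True), (False, True, False),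
      (False, True, True), (True, False, False), (True, False, True), (True, True, False), (True, True, True)}"
    by auto
  show ?thesis unfolding u by (simp add: sumS_def)
qed

lemma Ts_Tv: "t \<in> Tys \<Longrightarrow> Ts q m t = Tv (Ts q m (True,True,True)) (Ts q m (False,False,True)) (Ts q m (False,False,False)) t"
  unfolding Tys_def Tv_def using Ts_rot[of q m False False True] Ts_rot[of q m True False False] by auto

lemma rec_T:
  fixes q :: real and m :: nat
  defines "H \<equiv> Ts q m (True,True,True)" and "N \<equiv> Ts q m (False,False,True)" and "M \<equiv> Ts q m (False,False,False)"
  shows "Ts q (Suc m) (True,True,True) = q * H^3 + 3 * H^3 + 6 * H^2 * N"
    "Ts q (Suc m) (False,False,True) = q * H^2 * N + H^3 + 7 * H^2 * N + H^2 * M + 7 * H * N^2"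
    "Ts q (Suc m) (False,False,False) = 3 * q * H * N^2 + H^3 + 12 * H^2 * N + 3 * H^2 * M + 36 * H * N^2 + 12 * H * N * M + 14 * N^3"
proof -
  have gen: "Ts q (Suc m) tX = (\<Sum>t0\<in>Tys. \<Sum>t1\<in>Tys. \<Sum>t2\<in>Tys. Tv H N M t0 * Tv H N M t1 * Tv H N M t2 * sumS (Gt q tX t0 t1 t2))" for tX
  proof -
    have "Ts q (Suc m) tX = (\<Sum>t0\<in>Tys. Tv H N M t0 * (\<Sum>t1\<in>Tys. Tv H N M t1 * (\<Sum>t2\<in>Tys. Tv H N M t2 *
       sumS (Gt q tX t0 t1 t2))))"
      unfolding recursion sum_UNIV_ty
      by (intro sum.cong refl arg_cong2[where f = "(*)"]) (simp_all add: Ts_Tv H_def N_def M_def)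
    then show ?thesis by (simp add: sum_distrib_left mult.assoc)
  qed
  show "Ts q (Suc m) (True,True,True) = q * H^3 + 3 * H^3 + 6 * H^2 * N" unfolding gen by (rule finH)
  show "Ts q (Suc m) (False,False,True) = q * H^2 * N + H^3 + 7 * H^2 * N + H^2 * M + 7 * H * N^2"
    unfolding gen by (rule finN)
  show "Ts q (Suc m) (False,False,False) = 3 * q * H * N^2 + H^3 + 12 * H^2 * N + 3 * H^2 * M + 36 * H * N^2 + 12 * H * N * M + 14 * N^3"
    unfolding gen by (rule finM)
qed

lemma ct0: "ct 0 {} = (True,True,True)"
  unfolding ct_def verts_0 by (simp add: same_comp_refl)

lemma ncomp0: "ncomp (sigma_verts 0) A = 1"
proof -
  have "ncomp (sigma_verts 0) A \<le> card (sigma_verts 0)" by (rule ncomp_le[OF finite_verts])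
  then have "ncomp (sigma_verts 0) A \<le> 1" by (simp add: verts_0)
  moreover have "ncomp (sigma_verts 0) A \<ge> 1" by (rule ncomp_ge1) (simp_all add: verts_0)
  ultimately show ?thesis by simp
qed

lemma Ts0: "Ts q 0 t = (if t = (True,True,True) then 1 else 0)"
proof -
  have "{A. A \<subseteq> sigma_edges 0 \<and> good 0 A \<and> ct 0 A = t} = (if t = (True,True,True) then {{}} else {})"
    by (auto simp: good_def ct0 ncomp0 cls_def)
  moreover have "nul 0 {} = 0" unfolding nul_def ncomp0 by (simp add: verts_0)
  ultimately show ?thesis unfolding Ts_def by simp
qed

lemma glue_all: "glue m (sigma_edges m) (sigma_edges m) (sigma_edges m) (True,True,True) = sigma_edges (Suc m)"
  unfolding glue_def ins_def UU_def edges_Suc brs_def by auto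

lemma connected: "ncomp (sigma_verts m) (sigma_edges m) = 1"
proof (induction m)
  case 0 then show ?case by (rule ncomp0)
next
  case (Suc m)
  have "ct m (sigma_edges m) = (True,True,True)"
    unfolding ct_def using ncomp_one_same[OF finite_verts Suc] rep_in by auto
  then show ?case using glue_Inv(2)[OF subset_refl subset_refl subset_refl, of m "(True,True,True)"] Suc
    unfolding glue_all
    by (simp add: mg_def M0_def stepm_def rhoT_def)
qed

lemma card_edges: "2 * card (sigma_edges m) + 3 = 3 ^ Suc m"
proof (induction m)
  case 0 then show ?case by simp
next
  case (Suc m)
  have "card (sigma_edges (Suc m)) = 3 * card (sigma_edges m) + 3"
    using card_glue[OF subset_refl subset_refl subset_refl, of m "(True,True,True)"] unfolding glue_all
    by (simp add: nb_def)
  then show ?case using Suc by simp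
qed



lemma verts_ne: "sigma_verts m \<noteq> {}"
proof -
  have "replicate m 0 \<in> sigma_verts m" by (rule rep_in) simp
  then show ?thesis by blast
qed

lemma tp1:
  "tutte_part (sigma_verts m) (sigma_edges m) P d 1 y =
   (\<Sum>A\<in>{A. A \<subseteq> sigma_edges m \<and> P A \<and> ncomp (sigma_verts m) A \<le> d + 1}. (y - 1) ^ nul m A)"
proof -
  let ?V = "sigma_verts m" and ?E = "sigma_edges m"
  let ?S = "{A. A \<subseteq> ?E \<and> P A}"
  have fS: "finite ?S" by (rule finite_subset[of _ "Pow (sigma_edges m)"]) (auto simp: finite_edges)
  have ne: "?V \<noteq> {}" by (rule verts_ne)
  have pw: "(1 - 1) ^ (grank ?V ?E - grank ?V A - d) * (y - 1) ^ nullity ?V A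
       = (if ncomp ?V A \<le> d + 1 then (y - 1) ^ nul m A else 0)" if A: "A \<in> ?S" for A
  proof -
    have k1: "ncomp ?V A \<ge> 1" by (rule ncomp_ge1[OF finite_verts ne])
    have kv: "ncomp ?V A \<le> card ?V" by (rule ncomp_le[OF finite_verts])
    have fo: "card ?V \<le> card A + ncomp ?V A" using forest_m A by blast
    have g: "grank ?V ?E - grank ?V A - d = ncomp ?V A - 1 - d"
      unfolding grank_def connected using k1 kv by simp
    have n: "nullity ?V A = nul m A" unfolding nullity_def grank_def nul_def using fo kv by simp
    show ?thesis unfolding g n by auto
  qed
  have "tutte_part ?V ?E P d 1 y = (\<Sum>A\<in>?S. if ncomp ?V A \<le> d + 1 then (y - 1) ^ nul m A else 0)"
    unfolding tutte_part_def by (rule sum.cong) (use pw in auto)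
  also have "\<dots> = (\<Sum>A\<in>{A \<in> ?S. ncomp ?V A \<le> d + 1}. (y - 1) ^ nul m A)"
    by (rule sum.inter_filter[OF fS, symmetric])
  finally show ?thesis by (simp add: conj_assoc)
qed

lemma facts_A:
  assumes "A \<subseteq> sigma_edges m"
  shows "cls (ct m A) \<le> ncomp (sigma_verts m) A" "ct m A \<in> Tys" "ncomp (sigma_verts m) A \<ge> 1"
  by (rule cls_le ct_Tys ncomp_ge1[OF finite_verts verts_ne])+

lemma H2_Ts: "H2 m 1 y = Ts (y - 1) m (True,True,True)"
proof -
  have eqv: "((same_comp (sigma_verts m) A (top_v m) (left_v m) \<and> same_comp (sigma_verts m) A (top_v m) (right_v m))
      \<and> ncomp (sigma_verts m) A \<le> 0 + 1) = (good m A \<and> ct m A = (True,True,True))" if A: "A \<subseteq> sigma_edges m" for A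
    using facts_A[OF A] unfolding good_def top_v_def left_v_def right_v_def
    by (auto simp: ct_def Tys_def cls_def)
  show ?thesis unfolding H2_def tp1 Ts_def by (rule sum.cong[OF Collect_cong refl]) (use eqv in blast)
qed

lemma Hn_Ts: "Hn m 1 y = Ts (y - 1) m (True,True,True)"
proof -
  have eqv: "(True \<and> ncomp (sigma_verts m) A \<le> 0 + 1) = (good m A \<and> ct m A = (True,True,True))"
    if A: "A \<subseteq> sigma_edges m" for A
  proof -
    have "ncomp (sigma_verts m) A = 1 \<Longrightarrow> ct m A = (True,True,True)" unfolding ct_def
      using ncomp_one_same[OF finite_verts] rep_in by auto
    then show ?thesis using facts_A[OF A] unfolding good_def by (auto simp: cls_def)
  qed
  show ?thesis unfolding Hn_def tutte_def tp1 Ts_def by (rule sum.cong[OF Collect_cong refl]) (use eqv in blast)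
qed

lemma Nn_Ts: "Nn m 1 y = Ts (y - 1) m (False,False,True)"
proof -
  have eqv: "((same_comp (sigma_verts m) A (left_v m) (right_v m) \<and> \<not> same_comp (sigma_verts m) A (top_v m) (left_v m))
      \<and> ncomp (sigma_verts m) A \<le> 1 + 1) = (good m A \<and> ct m A = (False,False,True))" if A: "A \<subseteq> sigma_edges m" for A
    using facts_A[OF A] unfolding good_def top_v_def left_v_def right_v_def
    by (auto simp: ct_def Tys_def cls_def)
  show ?thesis unfolding Nn_def tp1 Ts_def by (rule sum.cong[OF Collect_cong refl]) (use eqv in blast)
qed

lemma Mn_Ts: "Mn m 1 y = Ts (y - 1) m (False,False,False)"
proof -
  have eqv: "((\<not> same_comp (sigma_verts m) A (top_v m) (left_v m) \<and>
          \<not> same_comp (sigma_verts m) A (top_v m) (right_v m) \<and>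
          \<not> same_comp (sigma_verts m) A (left_v m) (right_v m)) \<and> ncomp (sigma_verts m) A \<le> 2 + 1)
       = (good m A \<and> ct m A = (False,False,False))" if A: "A \<subseteq> sigma_edges m" for A
    using facts_A[OF A] unfolding good_def top_v_def left_v_def right_v_def
    by (auto simp: ct_def Tys_def cls_def)
  show ?thesis unfolding Mn_def tp1 Ts_def by (rule sum.cong[OF Collect_cong refl]) (use eqv in blast)
qed


lemma alg: "(1 - p) \<noteq> (0::real) \<Longrightarrow> p ^ i * (1 - p) ^ (j + k) * (p / (1 - p)) ^ k = p ^ (i + k) * (1 - p) ^ j"
  by (simp add: power_add power_divide)

lemma rel_gen:
  fixes p :: real
  assumes p: "p \<noteq> 1"
  shows "reliability (sigma_verts m) (sigma_edges m) p
     = p ^ (card (sigma_verts m) - 1) * (1 - p) ^ (card (sigma_edges m) - (card (sigma_verts m) - 1))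
       * Hn m 1 (1 / (1 - p))"
proof -
  let ?V = "sigma_verts m" and ?E = "sigma_edges m"
  have p1: "1 - p \<noteq> 0" using p by simp
  have q: "1 / (1 - p) - 1 = p / (1 - p)" using p1 by (simp add: field_simps)
  have k1: "ncomp ?V A \<ge> 1" for A by (rule ncomp_ge1[OF finite_verts verts_ne])
  have S: "{A. A \<subseteq> ?E \<and> True \<and> ncomp ?V A \<le> 0 + 1} = {A. A \<subseteq> ?E \<and> ncomp ?V A = 1}"
    using k1 by (auto simp: le_Suc_eq) (metis k1 not_one_le_zero)
  have "Hn m 1 (1 / (1 - p)) = (\<Sum>A\<in>{A. A \<subseteq> ?E \<and> ncomp ?V A = 1}. (p / (1 - p)) ^ nul m A)"
    unfolding Hn_def tutte_def tp1 S q ..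
  then have "p ^ (card ?V - 1) * (1 - p) ^ (card ?E - (card ?V - 1)) * Hn m 1 (1 / (1 - p))
     = (\<Sum>A\<in>{A. A \<subseteq> ?E \<and> ncomp ?V A = 1}. p ^ (card ?V - 1) * (1 - p) ^ (card ?E - (card ?V - 1)) * (p / (1 - p)) ^ nul m A)"
    by (simp add: sum_distrib_left)
  also have "\<dots> = (\<Sum>A\<in>{A. A \<subseteq> ?E \<and> ncomp ?V A = 1}. p ^ card A * (1 - p) ^ (card ?E - card A))"
  proof (rule sum.cong[OF refl])
    fix A assume A: "A \<in> {A. A \<subseteq> ?E \<and> ncomp ?V A = 1}"
    have fo: "card ?V \<le> card A + 1" using forest_m[of A m] A by simp
    have ae: "card A \<le> card ?E" using A finite_edges card_mono by blast
    have v1: "card ?V \<ge> 1" using verts_ne finite_verts by (simp add: Suc_leI card_gt_0_iff)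
    have n: "nul m A = card A - (card ?V - 1)" unfolding nul_def using A fo v1 by simp
    have e1: "card ?E - (card ?V - 1) = (card ?E - card A) + nul m A" using fo ae n by simp
    have e2: "card A = (card ?V - 1) + nul m A" using fo n by simp
    show "p ^ (card ?V - 1) * (1 - p) ^ (card ?E - (card ?V - 1)) * (p / (1 - p)) ^ nul m A
        = p ^ card A * (1 - p) ^ (card ?E - card A)"
      unfolding e1 using alg[OF p1, of "card ?V - 1" "card ?E - card A" "nul m A"] e2 by simp
  qed
  finally show ?thesis unfolding reliability_def by simp
qed

theorem proposition4p6:
  fixes n :: nat and p :: real
  assumes "n \<ge> 1" and "0 \<le> p" and "p < 1"
  defines "y \<equiv> 1 / (1 - p)"
  shows "reliability (sigma_verts n) (sigma_edges n) p
           = p ^ (3 ^ n - 1) * (1 - p) ^ ((3 ^ n - 1) div 2) * Hn n 1 y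
    \<and> Hn n 1 y = H2 n 1 y
    \<and> H2 (n + 1) 1 y = p / (1 - p) * H2 n 1 y ^ 3 + 3 * H2 n 1 y ^ 3
                       + 6 * H2 n 1 y ^ 2 * Nn n 1 y
    \<and> Nn (n + 1) 1 y = p / (1 - p) * H2 n 1 y ^ 2 * Nn n 1 y + H2 n 1 y ^ 3
                       + 7 * H2 n 1 y ^ 2 * Nn n 1 y + H2 n 1 y ^ 2 * Mn n 1 y
                       + 7 * H2 n 1 y * Nn n 1 y ^ 2
    \<and> Mn (n + 1) 1 y = 3 * p / (1 - p) * H2 n 1 y * Nn n 1 y ^ 2 + H2 n 1 y ^ 3
                       + 12 * H2 n 1 y ^ 2 * Nn n 1 y + 3 * H2 n 1 y ^ 2 * Mn n 1 y
                       + 36 * H2 n 1 y * Nn n 1 y ^ 2 + 12 * H2 n 1 y * Nn n 1 y * Mn n 1 y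
                       + 14 * Nn n 1 y ^ 3
    \<and> H2 1 1 y = (3 - 2 * p) / (1 - p)
    \<and> Nn 1 1 y = 1
    \<and> Mn 1 1 y = 1"
proof -
  have p1: "1 - p \<noteq> 0" using assms by simp
  define q where "q = y - 1"
  have q: "q = p / (1 - p)" unfolding q_def y_def using p1 by (simp add: field_simps)
  have cE: "2 * card (sigma_edges n) + 3 = 3 ^ Suc n" by (rule card_edges)
  have cV: "card (sigma_verts n) = 3 ^ n" by (rule card_verts)
  have v1: "3 ^ n \<ge> (1::nat)" by simp
  have ediff: "card (sigma_edges n) - (3 ^ n - 1) = (3 ^ n - 1) div 2"
  proof -
    have "2 * (card (sigma_edges n) - (3 ^ n - 1)) = 3 ^ n - 1" using cE v1 by simp
    then show ?thesis by simp
  qed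
  have R: "reliability (sigma_verts n) (sigma_edges n) p
           = p ^ (3 ^ n - 1) * (1 - p) ^ ((3 ^ n - 1) div 2) * Hn n 1 y"
    using rel_gen[of p n] assms(3) unfolding cV ediff y_def by simp
  note r = rec_T[of q n]
  note r0 = rec_T[of q 0]
  have H1: "H2 1 1 y = (3 - 2 * p) / (1 - p)"
    unfolding H2_Ts q_def[symmetric] using r0(1) unfolding Ts0 q using p1 by (simp add: field_simps)
  have N1: "Nn 1 1 y = 1" unfolding Nn_Ts q_def[symmetric] using r0(2) unfolding Ts0 by simp
  have M1: "Mn 1 1 y = 1" unfolding Mn_Ts q_def[symmetric] using r0(3) unfolding Ts0 by simp
  show ?thesis
    unfolding Hn_Ts H2_Ts Nn_Ts Mn_Ts q_def[symmetric] Suc_eq_plus1[symmetric]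
    using R r H1 N1 M1 unfolding Hn_Ts H2_Ts Nn_Ts Mn_Ts q_def[symmetric] q
    by (simp add: mult.assoc)
qed


end
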